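(* Let $G=(V,E)$ be a connected graph with $n$ vertices, let $\mathscr{S}$ be a block system for $G$ with $V\notin\mathscr{S}$, and let $\psi$ be a probability distribution on $\mathscr{S}$ such that $\psi(v)>0$ for every $v\in V$. Fix $\lambda>1$. If $$q\ge(2s)^{s+1}\,\partial^+\,\Psi\,\lambda^{\mu^+},$$ then for every $\varepsilon>0$ the $(\mathscr{S},\psi)$-block dynamics satisfies $\tau(\mathcal{M}_{\mathrm{BD}}^{\mathscr{S},\psi}(G,\lambda,q),\varepsilon)\le 2\psi_{\min}^{-1}\log(n\varepsilon^{-1})$.
   Context: Potts model on $G=(V,E)$: configurations $\sigma\in\Omega=[q]^V$, $\mu(\sigma)$ = number of monochromatic edges, Gibbs distribution $\pi(\sigma)\propto\lambda^{\mu(\sigma)}$. $\tau(\mathcal{M},\varepsilon)=\max_x\min\{t:\|P^t(x,\cdot)-\pi\|_{TV}\le\varepsilon\}$. A block system for $G$ is a collection $\mathscr{S}$ of subsets of $V$ (blocks) whose union is $V$. For $S\subseteq V$, $X\in\Omega$ and $c\in[q]^S$, $X^{(S,c)}$ is the configuration equal to $c$ on $S$ and to $X$ off $S$; $\mu_{X,S}(c)$ is the number of monochromatic edges of $X^{(S,c)}$ incident with at least one vertex of $S$. Given a distribution $\psi$ on $\mathscr{S}$, the $(\mathscr{S},\psi)$-block dynamics $\mathcal{M}_{\mathrm{BD}}^{\mathscr{S},\psi}(G,\lambda,q)$ is the chain on $\Omega$ which from $X_t$ picks $S\in\mathscr{S}$ according to $\psi$, picks $c\in[q]^S$ with probability proportional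 to $\lambda^{\mu_{X_t,S}(c)}$, and moves to $X_t^{(S,c)}$. Parameters: $\partial S$ is the set of vertices of $V\setminus S$ having a neighbour in $S$; $s=\max_{S\in\mathscr{S}}|S|$; $\partial^+=\max_{S\in\mathscr{S}}|\partial S|^{\min\{|S|,|\partial S|\}}$; for a $\psi$-random block $\vec S$, $\psi(v)=\mathbb{P}(v\in\vec S)$, $\psi_\partial(v)=\mathbb{P}(v\in\partial\vec S)$, $\psi_{\min}=\min_v\psi(v)$, $\Psi=\max_{v\in V}\psi_\partial(v)/\psi(v)$. A colour used by $c\in[q]^S$ is free with respect to $X,S$ if it does not occur among $\{X(u):u\in\partial S\}$; $f(X,S,c)$ is the number of free colours used by $c$. For an integer $f\ge0$, $\mu^+_{X,S,f}=\max\{\mu_{X,S}(c)/(|S|-f): c\in[q]^S,\ f(X,S,c)=f\}$ (a maximum over the empty set is $0$), and $\mu^+=\max_{S\in\mathscr{S}}\max_{X\in\Omega}\max_{f\in\{0,\dots,|S|-1\}}\mu^+_{X,S,f}$. *)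

theory Defs
  imports Complex_Main "HOL-Library.FuncSet"
begin

definition simple_graph :: "'v set \<Rightarrow> ('v \<Rightarrow> 'v \<Rightarrow> bool) \<Rightarrow> bool" where
  "simple_graph V E \<longleftrightarrow> finite V \<and> (\<forall>u v. E u v \<longrightarrow> u \<in> V \<and> v \<in> V \<and> E v u \<and> u \<noteq> v)"

definition connected_graph :: "'v set \<Rightarrow> ('v \<Rightarrow> 'v \<Rightarrow> bool) \<Rightarrow> bool" where
  "connected_graph V E \<longleftrightarrow> V \<noteq> {} \<and> (\<forall>u\<in>V. \<forall>v\<in>V. E\<^sup>*\<^sup>* u v)"

definition edges :: "'v set \<Rightarrow> ('v \<Rightarrow> 'v \<Rightarrow> bool) \<Rightarrow> 'v set set" where
  "edges V E = {{u, v} | u v. u \<in> V \<and> v \<in> V \<and> E u v}"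

definition configs :: "'v set \<Rightarrow> nat \<Rightarrow> ('v \<Rightarrow> nat) set" where
  "configs V q = PiE V (\<lambda>_. {..<q})"

definition monochromatic :: "('v \<Rightarrow> 'v \<Rightarrow> bool) \<Rightarrow> ('v \<Rightarrow> nat) \<Rightarrow> 'v set \<Rightarrow> bool" where
  "monochromatic E \<sigma> e \<longleftrightarrow> (\<exists>u v. e = {u, v} \<and> E u v \<and> \<sigma> u = \<sigma> v)"

definition mono_count :: "'v set \<Rightarrow> ('v \<Rightarrow> 'v \<Rightarrow> bool) \<Rightarrow> ('v \<Rightarrow> nat) \<Rightarrow> nat" where
  "mono_count V E \<sigma> = card {e \<in> edges V E. monochromatic E \<sigma> e}"

definition gibbs :: "'v set \<Rightarrow> ('v \<Rightarrow> 'v \<Rightarrow> bool) \<Rightarrow> nat \<Rightarrow> real \<Rightarrow> ('v \<Rightarrow> nat) \<Rightarrow> real" where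
  "gibbs V E q lam \<sigma> = lam ^ mono_count V E \<sigma> / (\<Sum>\<tau>\<in>configs V q. lam ^ mono_count V E \<tau>)"

definition upd_conf :: "('v \<Rightarrow> nat) \<Rightarrow> 'v set \<Rightarrow> ('v \<Rightarrow> nat) \<Rightarrow> ('v \<Rightarrow> nat)" where
  "upd_conf X S c = (\<lambda>v. if v \<in> S then c v else X v)"

definition mu_block :: "'v set \<Rightarrow> ('v \<Rightarrow> 'v \<Rightarrow> bool) \<Rightarrow> ('v \<Rightarrow> nat) \<Rightarrow> 'v set \<Rightarrow> ('v \<Rightarrow> nat) \<Rightarrow> nat" where
  "mu_block V E X S c = card {e \<in> edges V E. monochromatic E (upd_conf X S c) e \<and> e \<inter> S \<noteq> {}}"

definition boundary :: "'v set \<Rightarrow> ('v \<Rightarrow> 'v \<Rightarrow> bool) \<Rightarrow> 'v set \<Rightarrow> 'v set" where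
  "boundary V E S = {u \<in> V - S. \<exists>v\<in>S. E u v}"

definition block_system :: "'v set \<Rightarrow> 'v set set \<Rightarrow> bool" where
  "block_system V \<S> \<longleftrightarrow> (\<forall>S\<in>\<S>. S \<subseteq> V) \<and> \<Union>\<S> = V"

definition prob_on :: "'v set set \<Rightarrow> ('v set \<Rightarrow> real) \<Rightarrow> bool" where
  "prob_on \<S> \<psi> \<longleftrightarrow> finite \<S> \<and> (\<forall>S\<in>\<S>. \<psi> S \<ge> 0) \<and> (\<Sum>S\<in>\<S>. \<psi> S) = 1"

definition block_dyn :: "'v set \<Rightarrow> ('v \<Rightarrow> 'v \<Rightarrow> bool) \<Rightarrow> nat \<Rightarrow> real \<Rightarrow> 'v set set \<Rightarrow> ('v set \<Rightarrow> real)
    \<Rightarrow> ('v \<Rightarrow> nat) \<Rightarrow> ('v \<Rightarrow> nat) \<Rightarrow> real" where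
  "block_dyn V E q lam \<S> \<psi> X Y =
     (\<Sum>S\<in>\<S>. \<psi> S *
        (\<Sum>c\<in>PiE S (\<lambda>_. {..<q}).
           if upd_conf X S c = Y
           then lam ^ mu_block V E X S c / (\<Sum>c'\<in>PiE S (\<lambda>_. {..<q}). lam ^ mu_block V E X S c')
           else 0))"

fun mat_pow :: "'a set \<Rightarrow> ('a \<Rightarrow> 'a \<Rightarrow> real) \<Rightarrow> nat \<Rightarrow> 'a \<Rightarrow> 'a \<Rightarrow> real" where
  "mat_pow Om P 0 x y = (if x = y then 1 else 0)"
| "mat_pow Om P (Suc t) x y = (\<Sum>z\<in>Om. mat_pow Om P t x z * P z y)"

definition tv_dist :: "'a set \<Rightarrow> ('a \<Rightarrow> real) \<Rightarrow> ('a \<Rightarrow> real) \<Rightarrow> real" where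
  "tv_dist Om p r = (\<Sum>y\<in>Om. \<bar>p y - r y\<bar>) / 2"

text \<open>Mixing time: max over x of min {t. TV(P^t(x,.), pi) <= eps} (well defined
  when each of these sets is nonempty).\<close>
definition mixing_time :: "'a set \<Rightarrow> ('a \<Rightarrow> 'a \<Rightarrow> real) \<Rightarrow> ('a \<Rightarrow> real) \<Rightarrow> real \<Rightarrow> nat" where
  "mixing_time Om P \<pi> eps = Max ((\<lambda>x. LEAST t. tv_dist Om (mat_pow Om P t x) \<pi> \<le> eps) ` Om)"

definition psi_v :: "'v set set \<Rightarrow> ('v set \<Rightarrow> real) \<Rightarrow> 'v \<Rightarrow> real" where
  "psi_v \<S> \<psi> v = (\<Sum>S\<in>{S\<in>\<S>. v \<in> S}. \<psi> S)"

definition psi_bd :: "'v set \<Rightarrow> ('v \<Rightarrow> 'v \<Rightarrow> bool) \<Rightarrow> 'v set set \<Rightarrow> ('v set \<Rightarrow> real) \<Rightarrow> 'v \<Rightarrow> real" where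
  "psi_bd V E \<S> \<psi> v = (\<Sum>S\<in>{S\<in>\<S>. v \<in> boundary V E S}. \<psi> S)"

definition psi_min :: "'v set \<Rightarrow> 'v set set \<Rightarrow> ('v set \<Rightarrow> real) \<Rightarrow> real" where
  "psi_min V \<S> \<psi> = Min (psi_v \<S> \<psi> ` V)"

definition Psi_ratio :: "'v set \<Rightarrow> ('v \<Rightarrow> 'v \<Rightarrow> bool) \<Rightarrow> 'v set set \<Rightarrow> ('v set \<Rightarrow> real) \<Rightarrow> real" where
  "Psi_ratio V E \<S> \<psi> = Max ((\<lambda>v. psi_bd V E \<S> \<psi> v / psi_v \<S> \<psi> v) ` V)"

definition max_block :: "'v set set \<Rightarrow> nat" where
  "max_block \<S> = Max (card ` \<S>)"

definition bd_plus :: "'v set \<Rightarrow> ('v \<Rightarrow> 'v \<Rightarrow> bool) \<Rightarrow> 'v set set \<Rightarrow> nat" where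
  "bd_plus V E \<S> = Max ((\<lambda>S. card (boundary V E S) ^ min (card S) (card (boundary V E S))) ` \<S>)"

definition free_count :: "'v set \<Rightarrow> ('v \<Rightarrow> 'v \<Rightarrow> bool) \<Rightarrow> ('v \<Rightarrow> nat) \<Rightarrow> 'v set \<Rightarrow> ('v \<Rightarrow> nat) \<Rightarrow> nat" where
  "free_count V E X S c = card (c ` S - X ` boundary V E S)"

text \<open>mu^+_{X,S,f}; maximum over the empty set is 0 (all values are nonnegative).\<close>
definition mu_plus_XSf :: "'v set \<Rightarrow> ('v \<Rightarrow> 'v \<Rightarrow> bool) \<Rightarrow> nat \<Rightarrow> ('v \<Rightarrow> nat) \<Rightarrow> 'v set \<Rightarrow> nat \<Rightarrow> real" where
  "mu_plus_XSf V E q X S f =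
     (let A = {real (mu_block V E X S c) / real (card S - f) | c.
                c \<in> PiE S (\<lambda>_. {..<q}) \<and> free_count V E X S c = f}
      in if A = {} then 0 else Max A)"

definition mu_plus :: "'v set \<Rightarrow> ('v \<Rightarrow> 'v \<Rightarrow> bool) \<Rightarrow> nat \<Rightarrow> 'v set set \<Rightarrow> real" where
  "mu_plus V E q \<S> = Max (insert 0 {mu_plus_XSf V E q X S f | X S f.
       S \<in> \<S> \<and> X \<in> configs V q \<and> f < card S})"

end

theory Submission
  imports Defs
begin


locale potts =
  fixes V :: "'v set" and E :: "'v \<Rightarrow> 'v \<Rightarrow> bool" and q :: nat and lam :: real
    and SS :: "'v set set" and psi :: "'v set \<Rightarrow> real"
  assumes sg: "simple_graph V E"
    and bs: "block_system V SS"
    and VnS: "V \<notin> SS"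
    and pr: "prob_on SS psi"
    and lam: "lam > 1"
    and qpos: "q > 0"
begin

abbreviation "Om \<equiv> configs V q"
abbreviation "CC S \<equiv> PiE S (\<lambda>_. {..<q})"
definition "W X S c = lam ^ mu_block V E X S c"
definition "Z X S = (\<Sum>c\<in>CC S. W X S c)"
definition "K X S c = W X S c / Z X S"
definition Op :: "(('v \<Rightarrow> nat) \<Rightarrow> real) \<Rightarrow> ('v \<Rightarrow> nat) \<Rightarrow> real" where "Op g x = (\<Sum>y\<in>Om. block_dyn V E q lam SS psi x y * g y)"
definition lip :: "real \<Rightarrow> (('v \<Rightarrow> nat) \<Rightarrow> real) \<Rightarrow> bool" where "lip L g \<longleftrightarrow> (\<forall>X\<in>Om. \<forall>Y\<in>Om. \<forall>v\<in>V. (\<forall>u. u \<noteq> v \<longrightarrow> X u = Y u) \<longrightarrow> \<bar>g X - g Y\<bar> \<le> L)"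

lemma finV: "finite V" using sg by (simp add: simple_graph_def)
lemma finSS: "finite SS" using pr by (simp add: prob_on_def)
lemma psi_nn: "S \<in> SS \<Longrightarrow> psi S \<ge> 0" using pr by (simp add: prob_on_def)
lemma psi_sum: "(\<Sum>S\<in>SS. psi S) = 1" using pr by (simp add: prob_on_def)
lemma blk_sub: "S \<in> SS \<Longrightarrow> S \<subseteq> V" using bs by (simp add: block_system_def)
lemma blk_fin: "S \<in> SS \<Longrightarrow> finite S" using blk_sub finV finite_subset by blast
lemma E_sym: "E u v \<Longrightarrow> E v u" using sg by (simp add: simple_graph_def)
lemma E_V: "E u v \<Longrightarrow> u \<in> V \<and> v \<in> V" using sg by (simp add: simple_graph_def)
lemma E_irr: "E u v \<Longrightarrow> u \<noteq> v" using sg by (simp add: simple_graph_def)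

lemma finOm: "finite Om" unfolding configs_def using finV by (simp add: finite_PiE)
lemma finCC: "finite S \<Longrightarrow> finite (CC S)" by (simp add: finite_PiE)
lemma cardCC: "finite S \<Longrightarrow> card (CC S) = q ^ card S" by (simp add: card_PiE)
lemma CC_ne: "CC S \<noteq> {}" using qpos by (auto simp add: PiE_eq_empty_iff)

lemma W_ge1: "W X S c \<ge> 1" unfolding W_def using lam by simp
lemma W_pos: "W X S c > 0" using W_ge1[of X S c] by linarith
lemma Z_ge: "finite S \<Longrightarrow> Z X S \<ge> real q ^ card S"
proof -
  assume f: "finite S"
  have "real q ^ card S = (\<Sum>c\<in>CC S. 1)" using cardCC[OF f] by simp
  also have "\<dots> \<le> Z X S" unfolding Z_def by (rule sum_mono) (rule W_ge1)
  finally show ?thesis .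
qed
lemma Z_pos: "finite S \<Longrightarrow> Z X S > 0"
proof -
  assume f: "finite S"
  have "real q ^ card S > 0" using qpos by simp
  then show ?thesis using Z_ge[OF f, of X] by linarith
qed
lemma K_nn: "finite S \<Longrightarrow> K X S c \<ge> 0" unfolding K_def using Z_pos W_pos
  by (simp add: less_imp_le)
lemma K_sum: "finite S \<Longrightarrow> (\<Sum>c\<in>CC S. K X S c) = 1"
  unfolding K_def using Z_pos[of S X] by (simp add: sum_divide_distrib[symmetric] Z_def)

lemma upd_in: "X \<in> Om \<Longrightarrow> S \<subseteq> V \<Longrightarrow> c \<in> CC S \<Longrightarrow> upd_conf X S c \<in> Om"
  unfolding configs_def upd_conf_def by (auto simp: PiE_iff extensional_def)

lemma Op_expand:
  assumes "X \<in> Om"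
  shows "Op g X = (\<Sum>S\<in>SS. psi S * (\<Sum>c\<in>CC S. K X S c * g (upd_conf X S c)))"
proof -
  have "Op g X = (\<Sum>y\<in>Om. \<Sum>S\<in>SS. psi S * (\<Sum>c\<in>CC S. (if upd_conf X S c = y then K X S c else 0) * g y))"
    unfolding Op_def block_dyn_def K_def W_def Z_def
    by (simp add: sum_distrib_right mult.assoc)
  also have "\<dots> = (\<Sum>S\<in>SS. psi S * (\<Sum>c\<in>CC S. \<Sum>y\<in>Om. (if upd_conf X S c = y then K X S c else 0) * g y))"
    by (subst sum.swap) (simp add: sum_distrib_left sum.swap[of _ Om])
  also have "\<dots> = (\<Sum>S\<in>SS. psi S * (\<Sum>c\<in>CC S. K X S c * g (upd_conf X S c)))"
  proof (rule sum.cong[OF refl], rule arg_cong[where f="\<lambda>t. psi _ * t"], rule sum.cong[OF refl])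
    fix S c assume S: "S \<in> SS" and c: "c \<in> CC S"
    have u: "upd_conf X S c \<in> Om" using upd_in[OF assms blk_sub[OF S] c] .
    show "(\<Sum>y\<in>Om. (if upd_conf X S c = y then K X S c else 0) * g y) = K X S c * g (upd_conf X S c)"
    proof -
      have "(\<Sum>y\<in>Om. (if upd_conf X S c = y then K X S c else 0) * g y)
          = (\<Sum>y\<in>Om. if upd_conf X S c = y then K X S c * g y else 0)"
        by (rule sum.cong) auto
      also have "\<dots> = K X S c * g (upd_conf X S c)" using u finOm by (simp add: sum.delta)
      finally show ?thesis .
    qed
  qed
  finally show ?thesis .
qed

lemma fin_edges: "finite (edges V E)"
proof -
  have "edges V E \<subseteq> Pow V" unfolding edges_def by auto
  then show ?thesis using finV finite_subset by blast
qed

lemma upd_eq_iff: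
  assumes c: "c \<in> CC S"
  shows "upd_conf X S c = Y \<longleftrightarrow> (\<forall>v. v \<notin> S \<longrightarrow> X v = Y v) \<and> c = restrict Y S"
proof
  assume h: "upd_conf X S c = Y"
  have "\<forall>v. v \<notin> S \<longrightarrow> X v = Y v" using h by (auto simp: upd_conf_def)
  moreover have "c = restrict Y S"
  proof
    fix v show "c v = restrict Y S v"
      using h c by (cases "v \<in> S") (auto simp: upd_conf_def PiE_iff extensional_def)
  qed
  ultimately show "(\<forall>v. v \<notin> S \<longrightarrow> X v = Y v) \<and> c = restrict Y S" by blast
next
  assume "(\<forall>v. v \<notin> S \<longrightarrow> X v = Y v) \<and> c = restrict Y S"
  then show "upd_conf X S c = Y" by (auto simp: upd_conf_def)
qed

lemma upd_agree: "(\<forall>v. v \<notin> S \<longrightarrow> X v = Y v) \<Longrightarrow> upd_conf X S c = upd_conf Y S c"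
  by (auto simp: upd_conf_def)

lemma mb_agree: "(\<forall>v. v \<notin> S \<longrightarrow> X v = Y v) \<Longrightarrow> mu_block V E X S c = mu_block V E Y S c"
proof -
  assume h: "\<forall>v. v \<notin> S \<longrightarrow> X v = Y v"
  have "upd_conf X S c = upd_conf Y S c" by (rule upd_agree[OF h])
  then show ?thesis unfolding mu_block_def by simp
qed
lemma W_agree: "(\<forall>v. v \<notin> S \<longrightarrow> X v = Y v) \<Longrightarrow> W X S c = W Y S c"
  unfolding W_def by (drule mb_agree[where c=c]) simp
lemma Z_agree: "(\<forall>v. v \<notin> S \<longrightarrow> X v = Y v) \<Longrightarrow> Z X S = Z Y S"
  unfolding Z_def by (rule sum.cong[OF refl]) (rule W_agree)
lemma K_agree: "(\<forall>v. v \<notin> S \<longrightarrow> X v = Y v) \<Longrightarrow> K X S c = K Y S c"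
proof -
  assume h: "\<forall>v. v \<notin> S \<longrightarrow> X v = Y v"
  show ?thesis unfolding K_def using W_agree[OF h, of c] Z_agree[OF h] by simp
qed

lemma restrict_CC: "Y \<in> Om \<Longrightarrow> S \<subseteq> V \<Longrightarrow> restrict Y S \<in> CC S"
  unfolding configs_def by (auto simp: PiE_iff)

definition "PS S x y = (if (\<forall>v. v \<notin> S \<longrightarrow> x v = y v) then K x S (restrict y S) else 0)"

lemma PS_sum:
  assumes x: "x \<in> Om" and S: "S \<subseteq> V"
  shows "(\<Sum>y\<in>Om. PS S x y * g y) = (\<Sum>c\<in>CC S. K x S c * g (upd_conf x S c))"
proof -
  let ?A = "{y\<in>Om. \<forall>v. v \<notin> S \<longrightarrow> x v = y v}"
  have "(\<Sum>y\<in>Om. PS S x y * g y) = (\<Sum>y\<in>?A. K x S (restrict y S) * g y)"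
    unfolding PS_def using finOm by (simp add: sum.inter_filter[symmetric] if_distrib[where f="\<lambda>t. t * _"] cong: if_cong)
  also have "\<dots> = (\<Sum>c\<in>CC S. K x S (restrict (upd_conf x S c) S) * g (upd_conf x S c))"
  proof (rule sum.reindex_bij_betw[symmetric])
    show "bij_betw (upd_conf x S) (CC S) ?A"
    proof (rule bij_betw_byWitness[where f'="\<lambda>y. restrict y S"])
      show "\<forall>c\<in>CC S. restrict (upd_conf x S c) S = c"
        by (auto simp: upd_conf_def PiE_iff extensional_def restrict_def)
      show "\<forall>y\<in>?A. upd_conf x S (restrict y S) = y"
        by (auto simp: upd_conf_def)
      show "upd_conf x S ` CC S \<subseteq> ?A" using upd_in[OF x S] by (auto simp: upd_conf_def)
      show "(\<lambda>y. restrict y S) ` ?A \<subseteq> CC S" using restrict_CC[OF _ S] by blast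
    qed
  qed
  also have "\<dots> = (\<Sum>c\<in>CC S. K x S c * g (upd_conf x S c))"
  proof (rule sum.cong[OF refl])
    fix c assume c: "c \<in> CC S"
    have "restrict (upd_conf x S c) S = c"
      using c by (auto simp: upd_conf_def PiE_iff extensional_def restrict_def)
    then show "K x S (restrict (upd_conf x S c) S) * g (upd_conf x S c) = K x S c * g (upd_conf x S c)" by simp
  qed
  finally show ?thesis .
qed

definition "mbS S z = card {e\<in>edges V E. monochromatic E z e \<and> e \<inter> S \<noteq> {}}"
definition "rS S z = card {e\<in>edges V E. monochromatic E z e \<and> e \<inter> S = {}}"

lemma mono_split: "mono_count V E z = mbS S z + rS S z"
proof -
  have "{e\<in>edges V E. monochromatic E z e} = {e\<in>edges V E. monochromatic E z e \<and> e \<inter> S \<noteq> {}} \<union> {e\<in>edges V E. monochromatic E z e \<and> e \<inter> S = {}}" by blast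
  moreover have "card ({e\<in>edges V E. monochromatic E z e \<and> e \<inter> S \<noteq> {}} \<union> {e\<in>edges V E. monochromatic E z e \<and> e \<inter> S = {}})
     = card {e\<in>edges V E. monochromatic E z e \<and> e \<inter> S \<noteq> {}} + card {e\<in>edges V E. monochromatic E z e \<and> e \<inter> S = {}}"
    by (rule card_Un_disjoint) (auto intro: finite_subset[OF _ fin_edges])
  ultimately show ?thesis unfolding mono_count_def mbS_def rS_def by simp
qed

lemma rS_agree:
  assumes "\<forall>v. v \<notin> S \<longrightarrow> x v = y v"
  shows "rS S x = rS S y"
proof -
  have "{e\<in>edges V E. monochromatic E x e \<and> e \<inter> S = {}} = {e\<in>edges V E. monochromatic E y e \<and> e \<inter> S = {}}"
  proof -
    have "monochromatic E x e = monochromatic E y e" if "e \<inter> S = {}" for e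
      unfolding monochromatic_def using assms that by (metis Int_insert_left insert_not_empty)
    then show ?thesis by blast
  qed
  then show ?thesis unfolding rS_def by simp
qed

lemma mb_restrict: "(\<forall>v. v \<notin> S \<longrightarrow> x v = y v) \<Longrightarrow> mu_block V E x S (restrict y S) = mbS S y"
proof -
  assume h: "\<forall>v. v \<notin> S \<longrightarrow> x v = y v"
  have "upd_conf x S (restrict y S) = y" using h by (auto simp: upd_conf_def)
  then show ?thesis unfolding mu_block_def mbS_def by simp
qed

definition "GZ = (\<Sum>\<tau>\<in>Om. lam ^ mono_count V E \<tau>)"

lemma detailed:
  assumes "x \<in> Om" "y \<in> Om"
  shows "gibbs V E q lam x * PS S x y = gibbs V E q lam y * PS S y x"
proof (cases "\<forall>v. v \<notin> S \<longrightarrow> x v = y v")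
  case True
  then have T2: "\<forall>v. v \<notin> S \<longrightarrow> y v = x v" by auto
  have Zeq: "Z x S = Z y S" using Z_agree[OF True] .
  have "lam ^ mono_count V E x * lam ^ mu_block V E x S (restrict y S)
      = lam ^ mono_count V E y * lam ^ mu_block V E y S (restrict x S)"
    using mono_split[of x S] mono_split[of y S] mb_restrict[OF True] mb_restrict[OF T2] rS_agree[OF True]
    by (simp add: power_add[symmetric] add_ac)
  then have "lam ^ mono_count V E x / GZ * (lam ^ mu_block V E x S (restrict y S) / Z y S)
      = lam ^ mono_count V E y / GZ * (lam ^ mu_block V E y S (restrict x S) / Z y S)"
    by (simp add: times_divide_times_eq)
  then show ?thesis using True T2
    unfolding PS_def gibbs_def K_def W_def Zeq GZ_def by simp
next
  case False
  then have "\<not> (\<forall>v. v \<notin> S \<longrightarrow> y v = x v)" by metis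
  then have "PS S x y = 0" "PS S y x = 0" using False unfolding PS_def by (simp_all only: if_False)
  then show ?thesis by simp
qed

lemma stat_block:
  assumes S: "S \<subseteq> V"
  shows "(\<Sum>x\<in>Om. gibbs V E q lam x * (\<Sum>c\<in>CC S. K x S c * g (upd_conf x S c)))
       = (\<Sum>y\<in>Om. gibbs V E q lam y * g y)"
proof -
  have "(\<Sum>x\<in>Om. gibbs V E q lam x * (\<Sum>c\<in>CC S. K x S c * g (upd_conf x S c)))
      = (\<Sum>x\<in>Om. \<Sum>y\<in>Om. gibbs V E q lam x * PS S x y * g y)"
    by (rule sum.cong[OF refl]) (simp add: PS_sum[OF _ S, symmetric] sum_distrib_left mult.assoc)
  also have "\<dots> = (\<Sum>x\<in>Om. \<Sum>y\<in>Om. gibbs V E q lam y * PS S y x * g y)"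
    by (rule sum.cong[OF refl], rule sum.cong[OF refl]) (simp add: detailed)
  also have "\<dots> = (\<Sum>y\<in>Om. gibbs V E q lam y * g y * (\<Sum>x\<in>Om. PS S y x * 1))"
    by (subst sum.swap) (simp add: sum_distrib_left mult_ac)
  also have "\<dots> = (\<Sum>y\<in>Om. gibbs V E q lam y * g y)"
  proof (rule sum.cong[OF refl])
    fix y assume y: "y \<in> Om"
    have "(\<Sum>x\<in>Om. PS S y x * 1) = 1"
      using PS_sum[OF y S, of "\<lambda>_. 1"] K_sum[of S y] S finV finite_subset by auto
    then show "gibbs V E q lam y * g y * (\<Sum>x\<in>Om. PS S y x * 1) = gibbs V E q lam y * g y" by simp
  qed
  finally show ?thesis .
qed

lemma stationary:
  shows "(\<Sum>x\<in>Om. gibbs V E q lam x * Op g x) = (\<Sum>y\<in>Om. gibbs V E q lam y * g y)"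
proof -
  have "(\<Sum>x\<in>Om. gibbs V E q lam x * Op g x)
      = (\<Sum>S\<in>SS. psi S * (\<Sum>x\<in>Om. gibbs V E q lam x * (\<Sum>c\<in>CC S. K x S c * g (upd_conf x S c))))"
    by (simp add: Op_expand sum_distrib_left sum.swap[of _ SS] mult_ac cong: sum.cong)
  also have "\<dots> = (\<Sum>S\<in>SS. psi S * (\<Sum>y\<in>Om. gibbs V E q lam y * g y))"
    by (rule sum.cong[OF refl]) (simp add: stat_block blk_sub)
  also have "\<dots> = (\<Sum>y\<in>Om. gibbs V E q lam y * g y)"
    by (simp add: sum_distrib_right[symmetric] psi_sum)
  finally show ?thesis .
qed

lemma Op_const: "X \<in> Om \<Longrightarrow> Op (\<lambda>_. 1) X = 1"
  by (simp add: Op_expand sum_distrib_left[symmetric] K_sum blk_fin psi_sum cong: sum.cong)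


abbreviation "PP \<equiv> block_dyn V E q lam SS psi"
abbreviation "pm \<equiv> psi_min V SS psi"
abbreviation "gb \<equiv> gibbs V E q lam"

lemma Om_ne: "Om \<noteq> {}"
proof -
  have "(\<lambda>v\<in>V. 0::nat) \<in> Om" unfolding configs_def using qpos by auto
  then show ?thesis by blast
qed

lemma GZ_pos: "GZ > 0"
proof -
  have "GZ \<ge> (\<Sum>\<tau>\<in>Om. 1)" unfolding GZ_def by (rule sum_mono) (use lam in simp)
  moreover have "(\<Sum>\<tau>\<in>Om. (1::real)) > 0" using Om_ne finOm by (simp add: card_gt_0_iff)
  ultimately show ?thesis by linarith
qed

lemma gb_nn: "gb x \<ge> 0" unfolding gibbs_def GZ_def[symmetric] using GZ_pos lam by simp
lemma gb_sum: "(\<Sum>x\<in>Om. gb x) = 1"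
  unfolding gibbs_def GZ_def[symmetric] using GZ_pos by (simp add: sum_divide_distrib[symmetric] GZ_def)

lemma Op_cong: "(\<And>y. y \<in> Om \<Longrightarrow> g y = h y) \<Longrightarrow> Op g x = Op h x"
  unfolding Op_def by (rule sum.cong) auto

lemma mat_Op: "x \<in> Om \<Longrightarrow> (\<Sum>y\<in>Om. mat_pow Om PP t x y * g y) = (Op ^^ t) g x"
proof (induction t arbitrary: g x)
  case 0
  then show ?case using finOm by (simp add: if_distrib[where f="\<lambda>t. t * _"] sum.delta cong: if_cong)
next
  case (Suc t)
  have "(\<Sum>y\<in>Om. mat_pow Om PP (Suc t) x y * g y) = (\<Sum>z\<in>Om. mat_pow Om PP t x z * Op g z)"
  proof -
    have "(\<Sum>y\<in>Om. mat_pow Om PP (Suc t) x y * g y) = (\<Sum>y\<in>Om. \<Sum>z\<in>Om. mat_pow Om PP t x z * (PP z y * g y))"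
      by (simp add: sum_distrib_right mult.assoc)
    also have "\<dots> = (\<Sum>z\<in>Om. \<Sum>y\<in>Om. mat_pow Om PP t x z * (PP z y * g y))" by (rule sum.swap)
    also have "\<dots> = (\<Sum>z\<in>Om. mat_pow Om PP t x z * Op g z)" by (simp add: Op_def sum_distrib_left)
    finally show ?thesis .
  qed
  also have "\<dots> = (Op ^^ t) (Op g) x" by (rule Suc.IH[OF Suc.prems])
  also have "\<dots> = (Op ^^ Suc t) g x" by (simp add: funpow_swap1)
  finally show ?case .
qed

lemma Op_pow_const: "x \<in> Om \<Longrightarrow> (Op ^^ t) (\<lambda>_. 1) x = 1"
proof (induction t arbitrary: x)
  case 0 then show ?case by simp
next
  case (Suc t)
  have "(Op ^^ Suc t) (\<lambda>_. 1) x = Op ((Op ^^ t) (\<lambda>_. 1)) x" by simp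
  also have "\<dots> = Op (\<lambda>_. 1) x" by (rule Op_cong) (rule Suc.IH)
  also have "\<dots> = 1" by (rule Op_const[OF Suc.prems])
  finally show ?case .
qed

lemma stat_pow: "(\<Sum>x\<in>Om. gb x * (Op ^^ t) g x) = (\<Sum>y\<in>Om. gb y * g y)"
proof (induction t)
  case 0 then show ?case by simp
next
  case (Suc t)
  have "(\<Sum>x\<in>Om. gb x * (Op ^^ Suc t) g x) = (\<Sum>x\<in>Om. gb x * Op ((Op ^^ t) g) x)" by simp
  also have "\<dots> = (\<Sum>x\<in>Om. gb x * (Op ^^ t) g x)" by (rule stationary)
  finally show ?case using Suc.IH by simp
qed

lemma lip_chain:
  assumes "lip L g" "L \<ge> 0"
  shows "\<And>X Y. X \<in> Om \<Longrightarrow> Y \<in> Om \<Longrightarrow> card {v\<in>V. X v \<noteq> Y v} = m \<Longrightarrow> \<bar>g X - g Y\<bar> \<le> m * L"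
proof (induction m)
  case 0
  then have "\<forall>v\<in>V. X v = Y v" using finV by auto
  moreover have "\<forall>v. v \<notin> V \<longrightarrow> X v = Y v" using 0 unfolding configs_def by (auto simp: PiE_iff extensional_def)
  ultimately have "X = Y" by auto
  then show ?case by simp
next
  case (Suc m)
  then have "{v\<in>V. X v \<noteq> Y v} \<noteq> {}" by (intro notI) simp
  then obtain v where v: "v \<in> V" "X v \<noteq> Y v" by blast
  define X' where "X' = X(v := Y v)"
  have X': "X' \<in> Om" using Suc.prems v unfolding X'_def configs_def by (auto simp: PiE_iff extensional_def)
  have "{u\<in>V. X' u \<noteq> Y u} = {u\<in>V. X u \<noteq> Y u} - {v}" unfolding X'_def by auto
  then have "card {u\<in>V. X' u \<noteq> Y u} = m" using Suc.prems(3) v by simp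
  then have 1: "\<bar>g X' - g Y\<bar> \<le> m * L" using Suc.IH X' Suc.prems by blast
  have 2: "\<bar>g X - g X'\<bar> \<le> L" using assms(1) Suc.prems(1) X' v(1) unfolding lip_def
    by (metis X'_def fun_upd_other)
  show ?case using 1 2 by (simp add: algebra_simps)
qed

lemma lip_diff:
  fixes L :: real
  assumes "lip L g" "L \<ge> 0" "X \<in> Om" "Y \<in> Om" "{v\<in>V. X v \<noteq> Y v} \<subseteq> A" "finite A"
  shows "\<bar>g X - g Y\<bar> \<le> card A * L"
proof -
  have "\<bar>g X - g Y\<bar> \<le> card {v\<in>V. X v \<noteq> Y v} * L" using lip_chain[OF assms(1,2) assms(3,4) refl] .
  also have "\<dots> \<le> card A * L" using assms(2,5,6) by (intro mult_right_mono) (auto intro: card_mono)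
  finally show ?thesis .
qed


lemma lip_pow:
  fixes r :: real
  assumes contr: "\<And>L g. L \<ge> 0 \<Longrightarrow> lip L g \<Longrightarrow> lip (r * L) (Op g)" and r: "r \<ge> 0"
    and "lip 1 h"
  shows "lip (r ^ t) ((Op ^^ t) h)"
proof (induction t)
  case 0 then show ?case using assms by simp
next
  case (Suc t)
  have "lip (r * r ^ t) (Op ((Op ^^ t) h))" by (rule contr) (use r Suc.IH in auto)
  then show ?case by simp
qed

lemma tv_bound:
  fixes r :: real
  assumes contr: "\<And>L g. L \<ge> 0 \<Longrightarrow> lip L g \<Longrightarrow> lip (r * L) (Op g)" and r: "r \<ge> 0"
    and x: "x \<in> Om"
  shows "tv_dist Om (mat_pow Om PP t x) gb \<le> card V * r ^ t"
proof -
  let ?p = "mat_pow Om PP t x"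
  define h where "h y = (if ?p y > gb y then 1 else (0::real))" for y
  define G where "G = (Op ^^ t) h"
  have hl: "lip 1 h" unfolding lip_def h_def by auto
  have Gl: "lip (r ^ t) G" unfolding G_def by (rule lip_pow[OF contr r hl])
  have psum: "(\<Sum>y\<in>Om. ?p y) = 1" using mat_Op[OF x, of t "\<lambda>_. 1"] Op_pow_const[OF x, of t] by simp
  have abs_eq: "\<bar>?p y - gb y\<bar> = 2 * ((?p y - gb y) * h y) - (?p y - gb y)" for y
    unfolding h_def by auto
  have "(\<Sum>y\<in>Om. \<bar>?p y - gb y\<bar>) = 2 * (\<Sum>y\<in>Om. (?p y - gb y) * h y) - ((\<Sum>y\<in>Om. ?p y) - (\<Sum>y\<in>Om. gb y))"
    by (simp add: abs_eq sum_subtractf sum_distrib_left)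
  also have "\<dots> = 2 * (\<Sum>y\<in>Om. (?p y - gb y) * h y)" using psum gb_sum by simp
  finally have tv: "tv_dist Om ?p gb = (\<Sum>y\<in>Om. ?p y * h y) - (\<Sum>y\<in>Om. gb y * h y)"
    unfolding tv_dist_def by (simp add: sum_subtractf left_diff_distrib)
  have "(\<Sum>y\<in>Om. ?p y * h y) = G x" unfolding G_def by (rule mat_Op[OF x])
  moreover have "(\<Sum>y\<in>Om. gb y * h y) = (\<Sum>z\<in>Om. gb z * G z)" unfolding G_def by (rule stat_pow[symmetric])
  ultimately have "tv_dist Om ?p gb = (\<Sum>z\<in>Om. gb z * (G x - G z))"
    using tv gb_sum by (simp add: right_diff_distrib sum_subtractf sum_distrib_right[symmetric])
  also have "\<dots> \<le> (\<Sum>z\<in>Om. gb z * (card V * r ^ t))"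
  proof (rule sum_mono)
    fix z assume z: "z \<in> Om"
    have "\<bar>G x - G z\<bar> \<le> card V * r ^ t"
      by (rule lip_diff[OF Gl _ x z]) (use r finV in auto)
    then show "gb z * (G x - G z) \<le> gb z * (card V * r ^ t)"
      using gb_nn[of z] by (intro mult_left_mono) auto
  qed
  also have "\<dots> = card V * r ^ t" using gb_sum by (simp add: sum_distrib_right[symmetric])
  finally show ?thesis .
qed

end


lemma pow_sum_card:
  assumes "finite S"
  shows "(\<Sum>P\<in>Pow S. (w::nat) ^ card P) = (w + 1) ^ card S"
  using assms
proof (induction S rule: finite_induct)
  case empty then show ?case by simp
next
  case (insert x F)
  have disj: "Pow F \<inter> insert x ` Pow F = {}" using insert.hyps by auto
  have inj: "inj_on (insert x) (Pow F)" using insert.hyps unfolding inj_on_def by (metis PowD insert_ident subsetD)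
  have "(\<Sum>P\<in>Pow (insert x F). w ^ card P) = (\<Sum>P\<in>Pow F. w ^ card P) + (\<Sum>P\<in>insert x ` Pow F. w ^ card P)"
    unfolding Pow_insert using insert.hyps disj by (intro sum.union_disjoint) auto
  also have "(\<Sum>P\<in>insert x ` Pow F. w ^ card P) = (\<Sum>P\<in>Pow F. w ^ card (insert x P))"
    by (rule sum.reindex[OF inj, unfolded comp_def])
  also have "\<dots> = (\<Sum>P\<in>Pow F. w * w ^ card P)"
  proof (rule sum.cong[OF refl])
    fix P assume "P \<in> Pow F"
    then have "P \<subseteq> F" by auto
    then have "finite P" "x \<notin> P" using insert.hyps finite_subset by auto
    then have "card (insert x P) = Suc (card P)" by simp
    then show "w ^ card (insert x P) = w * w ^ card P" by simp
  qed
  finally show ?case using insert by (simp add: sum_distrib_left[symmetric])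
qed

lemma count_free:
  fixes S :: "'a set" and N :: "nat set"
  assumes fS: "finite S" and fN: "finite N" and dN: "card N \<le> d" and d1: "d \<ge> 1" and fk: "f \<le> card S"
  shows "card {c \<in> PiE S (\<lambda>_. {..<q}). card (c ` S - N) = f} \<le> q ^ f * (f + 1) ^ card S * d ^ (card S - f)"
proof -
  define TT where "TT = {T. T \<subseteq> {..<q} - N \<and> card T = f}"
  define PP where "PP = {P. P \<subseteq> S \<and> f \<le> card P}"
  define U where "U = (\<Union>T\<in>TT. \<Union>P\<in>PP. PiE S (\<lambda>u. if u \<in> P then T else N))"
  have fTT: "finite TT" unfolding TT_def by (rule finite_subset[of _ "Pow {..<q}"]) auto
  have fPP: "finite PP" proof (rule finite_subset[of _ "Pow S"]) show "PP \<subseteq> Pow S" unfolding PP_def by auto qed (use fS in simp)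
  have sub: "{c \<in> PiE S (\<lambda>_. {..<q}). card (c ` S - N) = f} \<subseteq> U"
  proof
    fix c assume c: "c \<in> {c \<in> PiE S (\<lambda>_. {..<q}). card (c ` S - N) = f}"
    define T where "T = c ` S - N"
    define P where "P = {u\<in>S. c u \<notin> N}"
    have "T \<in> TT" using c unfolding TT_def T_def by (auto simp: PiE_iff)
    moreover have "c ` P = T" unfolding P_def T_def by auto
    then have "f \<le> card P" using c T_def P_def fS card_image_le[of P c] by (auto intro: finite_subset)
    then have "P \<in> PP" unfolding PP_def P_def by auto
    moreover have "c \<in> PiE S (\<lambda>u. if u \<in> P then T else N)"
      using c unfolding P_def T_def by (auto simp: PiE_iff)
    ultimately show "c \<in> U" unfolding U_def by blast
  qed
  have fU: "finite U" unfolding U_def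
  proof (intro finite_UN_I fTT fPP finite_PiE fS)
    fix T P u assume "T \<in> TT"
    then have "finite T" unfolding TT_def by (auto intro: finite_subset)
    then show "finite (if u \<in> P then T else N)" using fN by simp
  qed
  have cardPi: "card (PiE S (\<lambda>u. if u \<in> P then T else N)) \<le> f ^ card P * d ^ (card S - f)"
    if T: "T \<in> TT" and P: "P \<in> PP" for T P
  proof -
    have PS: "P \<subseteq> S" and fP: "f \<le> card P" using P unfolding PP_def by auto
    have "card (PiE S (\<lambda>u. if u \<in> P then T else N)) = (\<Prod>u\<in>S. if u \<in> P then card T else card N)"
      using fS by (simp add: card_PiE if_distrib[where f=card])
    also have "\<dots> = (\<Prod>u\<in>S \<inter> {u. u \<in> P}. card T) * (\<Prod>u\<in>S \<inter> - {u. u \<in> P}. card N)"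
      by (rule prod.If_cases[OF fS])
    also have "\<dots> = f ^ card P * card N ^ (card S - card P)"
    proof -
      have "S \<inter> {u. u \<in> P} = P" using PS by auto
      moreover have "S \<inter> - {u. u \<in> P} = S - P" by auto
      moreover have "card (S - P) = card S - card P" using PS fS by (simp add: card_Diff_subset finite_subset)
      moreover have "card T = f" using T unfolding TT_def by auto
      ultimately show ?thesis by simp
    qed
    also have "\<dots> \<le> f ^ card P * d ^ (card S - f)"
    proof (rule mult_left_mono)
      have "card N ^ (card S - card P) \<le> d ^ (card S - card P)" using dN by (rule power_mono) simp
      also have "\<dots> \<le> d ^ (card S - f)" using d1 fP by (intro power_increasing) auto
      finally show "card N ^ (card S - card P) \<le> d ^ (card S - f)" .
    qed simp
    finally show ?thesis .
  qed
  have "card {c \<in> PiE S (\<lambda>_. {..<q}). card (c ` S - N) = f} \<le> card U"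
    by (rule card_mono[OF fU sub])
  also have "card U \<le> (\<Sum>T\<in>TT. card (\<Union>P\<in>PP. PiE S (\<lambda>u. if u \<in> P then T else N)))"
    unfolding U_def by (rule card_UN_le[OF fTT])
  also have "\<dots> \<le> (\<Sum>T\<in>TT. \<Sum>P\<in>PP. f ^ card P * d ^ (card S - f))"
  proof (rule sum_mono)
    fix T assume T: "T \<in> TT"
    have "card (\<Union>P\<in>PP. PiE S (\<lambda>u. if u \<in> P then T else N)) \<le> (\<Sum>P\<in>PP. card (PiE S (\<lambda>u. if u \<in> P then T else N)))"
      by (rule card_UN_le[OF fPP])
    also have "\<dots> \<le> (\<Sum>P\<in>PP. f ^ card P * d ^ (card S - f))" by (rule sum_mono) (rule cardPi[OF T])
    finally show "card (\<Union>P\<in>PP. PiE S (\<lambda>u. if u \<in> P then T else N)) \<le> (\<Sum>P\<in>PP. f ^ card P * d ^ (card S - f))" .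
  qed
  also have "\<dots> = card TT * (\<Sum>P\<in>PP. f ^ card P * d ^ (card S - f))" by simp
  also have "\<dots> \<le> q ^ f * ((f + 1) ^ card S * d ^ (card S - f))"
  proof (rule mult_le_mono)
    have "card TT = card ({..<q} - N) choose f" unfolding TT_def by (rule n_subsets) simp
    also have "\<dots> \<le> card ({..<q} - N) ^ f"
      by (cases "f \<le> card ({..<q} - N)") (auto intro: binomial_le_pow simp: binomial_eq_0)
    also have "\<dots> \<le> q ^ f"
    proof (rule power_mono)
      have "card ({..<q} - N) \<le> card {..<q}" by (rule card_mono) auto
      then show "card ({..<q} - N) \<le> q" by simp
    qed simp
    finally show "card TT \<le> q ^ f" .
    have "(\<Sum>P\<in>PP. f ^ card P * d ^ (card S - f)) \<le> (\<Sum>P\<in>Pow S. f ^ card P * d ^ (card S - f))"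
      by (rule sum_mono2) (use fS PP_def in auto)
    also have "\<dots> = (f + 1) ^ card S * d ^ (card S - f)"
      by (simp add: sum_distrib_right[symmetric] pow_sum_card[OF fS])
    finally show "(\<Sum>P\<in>PP. f ^ card P * d ^ (card S - f)) \<le> (f + 1) ^ card S * d ^ (card S - f)" .
  qed
  finally show ?thesis by (simp add: mult.assoc)
qed

lemma two_k_le: "k \<ge> 1 \<Longrightarrow> 2 * k \<le> (2::nat) ^ k"
proof (induction k)
  case 0 then show ?case by simp
next
  case (Suc k)
  then show ?case by (cases "k = 0") auto
qed

lemma key_nat: "k \<ge> 1 \<Longrightarrow> 4 * k ^ (k + 2) \<le> (2 * k) ^ (k + 1)"
proof -
  assume k: "k \<ge> 1"
  have "4 * k ^ (k + 2) = (2 * (2 * k)) * k ^ (k + 1)" by (simp add: power_add)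
  also have "\<dots> \<le> (2 * 2 ^ k) * k ^ (k + 1)" using two_k_le[OF k] by simp
  also have "\<dots> = (2 * k) ^ (k + 1)" by (simp add: power_mult_distrib)
  finally show ?thesis .
qed

lemma numeric:
  fixes k d s bp :: nat and M Ps q :: real
  assumes k1: "k \<ge> 1" and d1: "d \<ge> 1" and ks: "k \<le> s" and dbp: "d \<le> bp"
    and M1: "M \<ge> 1" and Ps: "Ps > 0" and q0: "q > 0"
    and hq: "q \<ge> (2 * real s) ^ (s + 1) * real bp * Ps * M"
  shows "real k * Ps * min 1 ((\<Sum>f<k. M ^ (k - f) * q ^ f * ((real f + 1) ^ k * real d ^ (k - f))) / q ^ k) \<le> 1 / 4"
proof (cases "Ps \<le> 1 / (4 * real k)")
  case True
  have "real k * Ps * min 1 ((\<Sum>f<k. M ^ (k - f) * q ^ f * ((real f + 1) ^ k * real d ^ (k - f))) / q ^ k) \<le> real k * Ps * 1"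
    using Ps k1 by (intro mult_left_mono) auto
  also have "\<dots> \<le> 1 / 4" using True k1 by (simp add: field_simps)
  finally show ?thesis .
next
  case False
  define Q where "Q = (2 * real s) ^ (s + 1) * real bp"
  have Qk: "Q \<ge> (2 * real k) ^ (k + 1) * real d"
  proof -
    have "(2 * real k) ^ (k + 1) \<le> (2 * real s) ^ (k + 1)" using ks by (intro power_mono) auto
    also have "\<dots> \<le> (2 * real s) ^ (s + 1)" using ks k1 by (intro power_increasing) auto
    finally show ?thesis unfolding Q_def using dbp by (intro mult_mono) auto
  qed
  have Qpos: "Q > 0" using Qk k1 d1 by (smt (verit) of_nat_0_less_iff mult_pos_pos zero_less_power le_numeral_extra(2) of_nat_1 of_nat_le_iff)
  have QM: "Q * M \<le> 4 * real k * q"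
  proof -
    have "Q * M * (1 / (4 * real k)) \<le> Q * M * Ps" using False Qpos M1 by (intro mult_left_mono) auto
    also have "\<dots> \<le> q" using hq unfolding Q_def by (simp add: mult_ac)
    finally show ?thesis using k1 by (simp add: field_simps)
  qed
  have kd: "4 * real k * real d \<le> Q"
  proof -
    have "4 * real k \<le> (2 * real k) ^ (k + 1)"
    proof -
      have "4 * real k \<le> (2 * real k) ^ 2" using k1 by (simp add: power2_eq_square)
      also have "\<dots> \<le> (2 * real k) ^ (k + 1)" using k1 by (intro power_increasing) auto
      finally show ?thesis .
    qed
    then show ?thesis using Qk d1 by (smt (verit) mult_right_mono of_nat_0_le_iff)
  qed
  have key: "real k * (4 * real k * real d) * real k ^ k \<le> Q"
  proof -
    have "real (4 * k ^ (k + 2)) \<le> real ((2 * k) ^ (k + 1))" using key_nat[OF k1] by linarith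
    then have "4 * real k ^ (k + 2) \<le> (2 * real k) ^ (k + 1)" by simp
    then have "4 * real k ^ (k + 2) * real d \<le> (2 * real k) ^ (k + 1) * real d" using d1 by (intro mult_right_mono) auto
    moreover have "real k * (4 * real k * real d) * real k ^ k = 4 * real k ^ (k + 2) * real d"
      by (simp add: power_add power2_eq_square mult_ac)
    ultimately show ?thesis using Qk by linarith
  qed
  have trm: "4 * real k ^ 2 * (M ^ (k - f) * q ^ f * ((real f + 1) ^ k * real d ^ (k - f))) \<le> Q * M * q ^ (k - 1)"
    if f: "f < k" for f
  proof -
    obtain i where i: "k - f = Suc i" using f by (metis Suc_diff_Suc)
    have qk: "k - 1 = f + i" using i by simp
    have Mi: "M ^ i * Q ^ i \<le> (4 * real k * q) ^ i"
    proof -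
      have "M * Q \<le> 4 * real k * q" using QM by (simp add: mult.commute)
      then have "(M * Q) ^ i \<le> (4 * real k * q) ^ i" using M1 Qpos by (intro power_mono) auto
      then show ?thesis by (simp add: power_mult_distrib)
    qed
    have fk: "(real f + 1) ^ k \<le> real k ^ k" using f by (intro power_mono) auto
    have dj: "(4 * real k * real d) ^ Suc i \<le> (4 * real k * real d) * Q ^ i"
      using kd by (simp, intro mult_left_mono power_mono) auto
    have A: "real k * (4 * real k * real d) ^ Suc i * (real f + 1) ^ k \<le> Q * Q ^ i"
    proof -
      have "real k * (4 * real k * real d) ^ Suc i * (real f + 1) ^ k \<le> real k * ((4 * real k * real d) * Q ^ i) * real k ^ k"
        using dj fk k1 Qpos by (intro mult_mono) auto
      also have "\<dots> = (real k * (4 * real k * real d) * real k ^ k) * Q ^ i" by (simp add: mult_ac)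
      also have "\<dots> \<le> Q * Q ^ i" using key Qpos by (intro mult_right_mono) auto
      finally show ?thesis .
    qed
    have "4 * real k ^ 2 * (M ^ Suc i * q ^ f * ((real f + 1) ^ k * real d ^ Suc i)) * Q ^ i
        = (4 * real k ^ 2 * q ^ f * (real f + 1) ^ k * real d ^ Suc i * M) * (M ^ i * Q ^ i)"
      by (simp add: mult_ac)
    also have "\<dots> \<le> (4 * real k ^ 2 * q ^ f * (real f + 1) ^ k * real d ^ Suc i * M) * (4 * real k * q) ^ i"
      using Mi M1 q0 by (intro mult_left_mono) auto
    also have "\<dots> = M * q ^ (k - 1) * (real k * (4 * real k * real d) ^ Suc i * (real f + 1) ^ k)"
      unfolding qk by (simp add: power_mult_distrib power_add power2_eq_square mult_ac)
    also have "\<dots> \<le> M * q ^ (k - 1) * (Q * Q ^ i)"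
      using A M1 q0 by (intro mult_left_mono) auto
    finally have "4 * real k ^ 2 * (M ^ Suc i * q ^ f * ((real f + 1) ^ k * real d ^ Suc i)) * Q ^ i
        \<le> (Q * M * q ^ (k - 1)) * Q ^ i" by (simp add: mult_ac)
    then show ?thesis unfolding i using Qpos by (simp add: mult_le_cancel_right)
  qed
  define Ds where "Ds = (\<Sum>f<k. M ^ (k - f) * q ^ f * ((real f + 1) ^ k * real d ^ (k - f)))"
  have "4 * real k ^ 2 * Ds \<le> (\<Sum>f<k. Q * M * q ^ (k - 1))"
    unfolding Ds_def sum_distrib_left by (rule sum_mono) (rule trm, simp)
  also have "\<dots> = real k * (Q * M * q ^ (k - 1))" by simp
  finally have Ds: "4 * real k * Ds \<le> Q * M * q ^ (k - 1)" using k1 by (simp add: power2_eq_square mult_ac)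
  have Dsnn: "Ds \<ge> 0" unfolding Ds_def using M1 q0 by (intro sum_nonneg) auto
  have "real k * Ps * min 1 (Ds / q ^ k) \<le> real k * Ps * (Ds / q ^ k)"
    using Ps k1 by (intro mult_left_mono) auto
  also have "\<dots> = Ps * (4 * real k * Ds) / (4 * q ^ k)" using q0 by (simp add: field_simps)
  also have "\<dots> \<le> Ps * (Q * M * q ^ (k - 1)) / (4 * q ^ k)"
    using Ds Ps q0 by (intro divide_right_mono mult_left_mono) auto
  also have "\<dots> = (Q * M * Ps) / (4 * q)"
  proof -
    have "q ^ k = q * q ^ (k - 1)" using k1 by (metis One_nat_def Suc_pred power_Suc less_le_trans zero_less_one)
    then show ?thesis using q0 by (simp add: field_simps)
  qed
  also have "\<dots> \<le> q / (4 * q)" using hq q0 unfolding Q_def by (intro divide_right_mono) (auto simp: mult_ac)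
  also have "\<dots> = 1 / 4" using q0 by simp
  finally show ?thesis unfolding Ds_def .
qed



context potts begin

abbreviation "mp \<equiv> mu_plus V E q SS"
abbreviation "MM \<equiv> lam powr mp"

lemma card_blk_le: "S \<in> SS \<Longrightarrow> card S \<le> card V"
  using blk_sub finV by (simp add: card_mono)

lemma mp_fin: "finite {mu_plus_XSf V E q X S f | X S f. S \<in> SS \<and> X \<in> Om \<and> f < card S}"
proof (rule finite_subset)
  show "{mu_plus_XSf V E q X S f | X S f. S \<in> SS \<and> X \<in> Om \<and> f < card S}
        \<subseteq> (\<lambda>(X, S, f). mu_plus_XSf V E q X S f) ` (Om \<times> SS \<times> {..<card V})"
  proof
    fix x assume "x \<in> {mu_plus_XSf V E q X S f | X S f. S \<in> SS \<and> X \<in> Om \<and> f < card S}"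
    then obtain X S f where "x = mu_plus_XSf V E q X S f" "S \<in> SS" "X \<in> Om" "f < card S" by blast
    then show "x \<in> (\<lambda>(X, S, f). mu_plus_XSf V E q X S f) ` (Om \<times> SS \<times> {..<card V})"
      using card_blk_le[of S] by (intro image_eqI[where x="(X, S, f)"]) auto
  qed
qed (use finOm finSS in auto)

lemma mp_nn: "mp \<ge> 0"
  unfolding mu_plus_def using mp_fin by (intro Max_ge) auto

lemma mb_le_mp:
  assumes S: "S \<in> SS" and X: "X \<in> Om" and c: "c \<in> CC S"
    and f: "free_count V E X S c < card S"
  shows "real (mu_block V E X S c) \<le> mp * real (card S - free_count V E X S c)"
proof -
  let ?f = "free_count V E X S c"
  define A where "A = {real (mu_block V E X S c) / real (card S - ?f) | c.
                c \<in> PiE S (\<lambda>_. {..<q}) \<and> free_count V E X S c = ?f}"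
  have fA: "finite A"
  proof -
    have "A = (\<lambda>c. real (mu_block V E X S c) / real (card S - ?f)) ` {c \<in> CC S. free_count V E X S c = ?f}"
      unfolding A_def by blast
    then show ?thesis using finCC[OF blk_fin[OF S]] by simp
  qed
  have inA: "real (mu_block V E X S c) / real (card S - ?f) \<in> A" unfolding A_def using c by blast
  then have ne: "A \<noteq> {}" by blast
  have "real (mu_block V E X S c) / real (card S - ?f) \<le> Max A" using fA inA by simp
  also have "Max A = mu_plus_XSf V E q X S ?f" unfolding mu_plus_XSf_def A_def[symmetric] Let_def using ne by simp
  also have "\<dots> \<le> mp" unfolding mu_plus_def using mp_fin S X f by (intro Max_ge) blast+
  finally have "real (mu_block V E X S c) / real (card S - ?f) \<le> mp" .
  moreover have "real (card S - ?f) > 0" using f by simp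
  ultimately show ?thesis by (simp add: field_simps)
qed

lemma MM_ge1: "MM \<ge> 1" using lam mp_nn by (simp add: ge_one_powr_ge_zero)

lemma W_le_MM:
  assumes S: "S \<in> SS" and X: "X \<in> Om" and c: "c \<in> CC S"
    and f: "free_count V E X S c < card S"
  shows "W X S c \<le> MM ^ (card S - free_count V E X S c)"
proof -
  have "W X S c = lam powr real (mu_block V E X S c)" unfolding W_def using lam by (simp add: powr_realpow)
  also have "\<dots> \<le> lam powr (mp * real (card S - free_count V E X S c))"
    using mb_le_mp[OF assms] lam by (intro powr_mono) auto
  also have "\<dots> = MM ^ (card S - free_count V E X S c)"
    using lam by (simp add: powr_powr[symmetric] powr_realpow)
  finally show ?thesis .
qed

lemma upd_other: "v \<notin> S \<Longrightarrow> (\<forall>u. u \<noteq> v \<longrightarrow> X u = Y u) \<Longrightarrow> w \<noteq> v \<Longrightarrow> upd_conf X S c w = upd_conf Y S c w"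
  by (simp add: upd_conf_def)

lemma mb_mono_free:
  assumes vS: "v \<notin> S" and agr: "\<forall>u. u \<noteq> v \<longrightarrow> X u = Y u" and nc: "X v \<notin> c ` S"
  shows "mu_block V E X S c \<le> mu_block V E Y S c"
  unfolding mu_block_def
proof (rule card_mono)
  show "finite {e \<in> edges V E. monochromatic E (upd_conf Y S c) e \<and> e \<inter> S \<noteq> {}}"
    using fin_edges by simp
  show "{e \<in> edges V E. monochromatic E (upd_conf X S c) e \<and> e \<inter> S \<noteq> {}}
        \<subseteq> {e \<in> edges V E. monochromatic E (upd_conf Y S c) e \<and> e \<inter> S \<noteq> {}}"
  proof (rule subsetI)
    fix e assume "e \<in> {e \<in> edges V E. monochromatic E (upd_conf X S c) e \<and> e \<inter> S \<noteq> {}}"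
    then have e: "e \<in> edges V E" "monochromatic E (upd_conf X S c) e" and eS: "e \<inter> S \<noteq> {}" by auto
    from e(2) obtain a b where ab: "e = {a, b}" "E a b" "upd_conf X S c a = upd_conf X S c b"
      unfolding monochromatic_def by blast
    have av: "a \<noteq> v"
    proof
      assume "a = v"
      then have "b \<in> S" using eS ab vS by auto
      then show False using ab \<open>a = v\<close> vS nc by (auto simp: upd_conf_def)
    qed
    have bv: "b \<noteq> v"
    proof
      assume "b = v"
      then have "a \<in> S" using eS ab vS by auto
      then have "c a = X v" using ab \<open>b = v\<close> vS by (auto simp: upd_conf_def)
      then show False using nc \<open>a \<in> S\<close> by (metis image_eqI)
    qed
    have "upd_conf Y S c a = upd_conf Y S c b"
      using ab(3) upd_other[OF vS agr av, of c] upd_other[OF vS agr bv, of c] by simp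
    then have "monochromatic E (upd_conf Y S c) e" unfolding monochromatic_def using ab by blast
    then show "e \<in> {e \<in> edges V E. monochromatic E (upd_conf Y S c) e \<and> e \<inter> S \<noteq> {}}" using e eS by simp
  qed
qed

lemma mb_eq_nobd:
  assumes vS: "v \<notin> S" and vB: "v \<notin> boundary V E S" and agr: "\<forall>u. u \<noteq> v \<longrightarrow> X u = Y u"
  shows "mu_block V E X S c = mu_block V E Y S c"
proof -
  have agr': "\<forall>u. u \<noteq> v \<longrightarrow> Y u = X u" using agr by auto
  have key: "monochromatic E (upd_conf A S c) e = monochromatic E (upd_conf B S c) e"
    if e: "e \<inter> S \<noteq> {}" and agrAB: "\<forall>u. u \<noteq> v \<longrightarrow> A u = B u" for e A B
  proof -
    have "monochromatic E (upd_conf B S c) e" if m: "monochromatic E (upd_conf A S c) e"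
      and agrAB: "\<forall>u. u \<noteq> v \<longrightarrow> A u = B u" for A B
    proof -
      from m obtain a b where ab: "e = {a, b}" "E a b" "upd_conf A S c a = upd_conf A S c b"
        unfolding monochromatic_def by blast
      have av: "a \<noteq> v"
      proof
        assume "a = v"
        then have "b \<in> S" using e ab vS by auto
        then have "v \<in> boundary V E S" using ab \<open>a = v\<close> vS E_V[OF ab(2)] unfolding boundary_def by auto
        then show False using vB by simp
      qed
      have bv: "b \<noteq> v"
      proof
        assume "b = v"
        then have "a \<in> S" using e ab vS by auto
        then have "v \<in> boundary V E S" using ab \<open>b = v\<close> vS E_V[OF ab(2)] E_sym[OF ab(2)] unfolding boundary_def by auto
        then show False using vB by simp
      qed
      have "upd_conf B S c a = upd_conf B S c b"
        using ab(3) upd_other[OF vS agrAB av, of c] upd_other[OF vS agrAB bv, of c] by simp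
      then show ?thesis unfolding monochromatic_def using ab by blast
    qed
    moreover have "\<forall>u. u \<noteq> v \<longrightarrow> B u = A u" using agrAB by auto
    ultimately show ?thesis using agrAB by blast
  qed
  have "{e \<in> edges V E. monochromatic E (upd_conf X S c) e \<and> e \<inter> S \<noteq> {}}
      = {e \<in> edges V E. monochromatic E (upd_conf Y S c) e \<and> e \<inter> S \<noteq> {}}"
    using key[OF _ agr] by blast
  then show ?thesis unfolding mu_block_def by simp
qed

lemma fin_bd: "finite (boundary V E S)" unfolding boundary_def using finV by auto

lemma D_bound:
  assumes S: "S \<in> SS" and X: "X \<in> Om" and Y: "Y \<in> Om" and vB: "v \<in> boundary V E S"
    and agr: "\<forall>u. u \<noteq> v \<longrightarrow> X u = Y u"
  shows "(\<Sum>c\<in>CC S. max 0 (W X S c - W Y S c))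
     \<le> (\<Sum>f<card S. MM ^ (card S - f) * real q ^ f * ((real f + 1) ^ card S * real (card (boundary V E S)) ^ (card S - f)))"
proof -
  let ?k = "card S" and ?N = "X ` boundary V E S" and ?d = "card (boundary V E S)"
  let ?fc = "\<lambda>c. free_count V E X S c"
  have vS: "v \<notin> S" using vB unfolding boundary_def by auto
  have fS: "finite S" using blk_fin[OF S] .
  define A where "A = {c \<in> CC S. X v \<in> c ` S}"
  have fA: "finite A" unfolding A_def using finCC[OF fS] by simp
  have fc_lt: "?fc c < ?k" if c: "c \<in> A" for c
  proof -
    have "X v \<in> c ` S" "X v \<in> ?N" using c vB unfolding A_def by auto
    then have "c ` S - ?N \<subset> c ` S" by auto
    then have "card (c ` S - ?N) < card (c ` S)" using fS by (intro psubset_card_mono) auto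
    also have "\<dots> \<le> ?k" by (rule card_image_le[OF fS])
    finally show ?thesis unfolding free_count_def .
  qed
  have "(\<Sum>c\<in>CC S. max 0 (W X S c - W Y S c)) \<le> (\<Sum>c\<in>CC S. if c \<in> A then MM ^ (?k - ?fc c) else 0)"
  proof (rule sum_mono)
    fix c assume c: "c \<in> CC S"
    show "max 0 (W X S c - W Y S c) \<le> (if c \<in> A then MM ^ (?k - ?fc c) else 0)"
    proof (cases "c \<in> A")
      case True
      have "max 0 (W X S c - W Y S c) \<le> W X S c" using W_pos[of X S c] W_pos[of Y S c] by simp
      also have "\<dots> \<le> MM ^ (?k - ?fc c)" by (rule W_le_MM[OF S X c fc_lt[OF True]])
      finally show ?thesis using True by simp
    next
      case False
      then have "X v \<notin> c ` S" using c unfolding A_def by auto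
      then have "mu_block V E X S c \<le> mu_block V E Y S c" by (rule mb_mono_free[OF vS agr])
      then have "W X S c \<le> W Y S c" unfolding W_def using lam by (intro power_increasing) auto
      then show ?thesis using False by simp
    qed
  qed
  also have "\<dots> = (\<Sum>c\<in>A. MM ^ (?k - ?fc c))"
    unfolding A_def using finCC[OF fS] by (simp add: sum.inter_filter[symmetric])
  also have "\<dots> = (\<Sum>f<?k. \<Sum>c\<in>{c. c \<in> A \<and> ?fc c = f}. MM ^ (?k - ?fc c))"
    by (rule sum.group[symmetric]) (use fA fc_lt in auto)
  also have "\<dots> = (\<Sum>f<?k. real (card {c. c \<in> A \<and> ?fc c = f}) * MM ^ (?k - f))"
    by (rule sum.cong[OF refl]) simp
  also have "\<dots> \<le> (\<Sum>f<?k. real (q ^ f * (f + 1) ^ ?k * ?d ^ (?k - f)) * MM ^ (?k - f))"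
  proof (rule sum_mono)
    fix f assume f: "f \<in> {..<?k}"
    have "card {c. c \<in> A \<and> ?fc c = f} \<le> card {c \<in> CC S. card (c ` S - ?N) = f}"
      by (rule card_mono) (auto simp: A_def free_count_def intro: finite_subset[OF _ finCC[OF fS]])
    also have "\<dots> \<le> q ^ f * (f + 1) ^ ?k * ?d ^ (?k - f)"
    proof (rule count_free[OF fS])
      show "finite ?N" using fin_bd by simp
      show "card ?N \<le> ?d" by (rule card_image_le[OF fin_bd])
      show "?d \<ge> 1" using vB fin_bd by (metis One_nat_def Suc_leI card_gt_0_iff empty_iff)
      show "f \<le> ?k" using f by simp
    qed
    finally have "real (card {c. c \<in> A \<and> ?fc c = f}) \<le> real (q ^ f * (f + 1) ^ ?k * ?d ^ (?k - f))"
      by (simp only: of_nat_le_iff)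
    then show "real (card {c. c \<in> A \<and> ?fc c = f}) * MM ^ (?k - f) \<le> real (q ^ f * (f + 1) ^ ?k * ?d ^ (?k - f)) * MM ^ (?k - f)"
      using MM_ge1 by (intro mult_right_mono) auto
  qed
  also have "\<dots> = (\<Sum>f<?k. MM ^ (?k - f) * real q ^ f * ((real f + 1) ^ ?k * real ?d ^ (?k - f)))"
    by (rule sum.cong[OF refl]) (simp add: mult_ac add.commute)
  finally show ?thesis .
qed

lemma pos_part:
  fixes p r h :: "'c \<Rightarrow> real"
  assumes fC: "finite C" and ne: "C \<noteq> {}" and eq: "sum p C = sum r C"
    and osc: "\<And>c c'. c \<in> C \<Longrightarrow> c' \<in> C \<Longrightarrow> h c - h c' \<le> B"
  shows "(\<Sum>c\<in>C. (p c - r c) * h c) \<le> B * (\<Sum>c\<in>C. max 0 (p c - r c))"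
proof -
  define m where "m = Min (h ` C)"
  obtain c0 where c0: "c0 \<in> C" "h c0 = m" unfolding m_def using fC ne
    by (metis (mono_tags, lifting) Min_in finite_imageI image_iff image_is_empty)
  have hm: "m \<le> h c" if "c \<in> C" for c unfolding m_def using fC that by simp
  have "(\<Sum>c\<in>C. (p c - r c) * h c) = (\<Sum>c\<in>C. (p c - r c) * (h c - m)) + m * (sum p C - sum r C)"
    by (simp add: algebra_simps sum_subtractf sum_distrib_left sum.distrib)
  also have "\<dots> = (\<Sum>c\<in>C. (p c - r c) * (h c - m))" using eq by simp
  also have "\<dots> \<le> (\<Sum>c\<in>C. max 0 (p c - r c) * B)"
  proof (rule sum_mono)
    fix c assume c: "c \<in> C"
    have "(p c - r c) * (h c - m) \<le> max 0 (p c - r c) * (h c - m)" using hm[OF c] by (intro mult_right_mono) auto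
    also have "\<dots> \<le> max 0 (p c - r c) * B" using osc[OF c c0(1)] c0(2) by (intro mult_left_mono) auto
    finally show "(p c - r c) * (h c - m) \<le> max 0 (p c - r c) * B" .
  qed
  finally show ?thesis by (simp add: sum_distrib_left mult_ac)
qed

lemma K_pp1: "finite S \<Longrightarrow> (\<Sum>c\<in>CC S. max 0 (K X S c - K Y S c)) \<le> 1"
proof -
  assume f: "finite S"
  have "(\<Sum>c\<in>CC S. max 0 (K X S c - K Y S c)) \<le> (\<Sum>c\<in>CC S. K X S c)"
    by (rule sum_mono) (use K_nn[OF f] in auto)
  then show ?thesis using K_sum[OF f] by simp
qed

lemma K_pp2:
  assumes f: "finite S" and ZZ: "Z Y S \<le> Z X S"
  shows "(\<Sum>c\<in>CC S. max 0 (K X S c - K Y S c)) \<le> (\<Sum>c\<in>CC S. max 0 (W X S c - W Y S c)) / real q ^ card S"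
proof -
  have ZY: "Z Y S \<ge> real q ^ card S" "real q ^ card S > 0" using Z_ge[OF f] qpos by auto
  have "(\<Sum>c\<in>CC S. max 0 (K X S c - K Y S c)) \<le> (\<Sum>c\<in>CC S. max 0 (W X S c - W Y S c) / real q ^ card S)"
  proof (rule sum_mono)
    fix c
    have "K X S c - K Y S c \<le> (W X S c - W Y S c) / Z Y S"
      unfolding K_def using W_pos[of X S c] Z_pos[OF f, of X] Z_pos[OF f, of Y] ZZ
      by (simp add: diff_divide_distrib divide_left_mono)
    also have "\<dots> \<le> max 0 (W X S c - W Y S c) / Z Y S"
      using Z_pos[OF f, of Y] by (intro divide_right_mono) auto
    finally have a: "K X S c - K Y S c \<le> max 0 (W X S c - W Y S c) / Z Y S" .
    have b: "0 \<le> max 0 (W X S c - W Y S c) / Z Y S" using Z_pos[OF f, of Y] by simp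
    have "max 0 (K X S c - K Y S c) \<le> max 0 (W X S c - W Y S c) / Z Y S"
      using a b by simp
    also have "\<dots> \<le> max 0 (W X S c - W Y S c) / real q ^ card S"
      using ZY Z_pos[OF f, of Y] by (intro divide_left_mono) auto
    finally show "max 0 (K X S c - K Y S c) \<le> max 0 (W X S c - W Y S c) / real q ^ card S" .
  qed
  then show ?thesis by (simp add: sum_divide_distrib)
qed

abbreviation "Dsum S \<equiv> (\<Sum>f<card S. MM ^ (card S - f) * real q ^ f * ((real f + 1) ^ card S * real (card (boundary V E S)) ^ (card S - f)))"

definition "AA g X S = (\<Sum>c\<in>CC S. K X S c * g (upd_conf X S c))"

lemma block_bound:
  assumes S: "S \<in> SS" and X: "X \<in> Om" and Y: "Y \<in> Om" and v: "v \<in> V" and vS: "v \<notin> S"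
    and agr: "\<forall>u. u \<noteq> v \<longrightarrow> X u = Y u" and lg: "lip L g" and L0: "L \<ge> 0"
  shows "AA g X S - AA g Y S \<le> L + (if v \<in> boundary V E S then L * real (card S) * min 1 (Dsum S / real q ^ card S) else 0)"
proof -
  have fS: "finite S" using blk_fin[OF S] .
  have SV: "S \<subseteq> V" using blk_sub[OF S] .
  let ?h = "\<lambda>c. g (upd_conf Y S c)"
  have split: "AA g X S - AA g Y S = (\<Sum>c\<in>CC S. K X S c * (g (upd_conf X S c) - g (upd_conf Y S c)))
      + (\<Sum>c\<in>CC S. (K X S c - K Y S c) * ?h c)"
    unfolding AA_def by (simp add: algebra_simps sum_subtractf sum.distrib)
  have first: "(\<Sum>c\<in>CC S. K X S c * (g (upd_conf X S c) - g (upd_conf Y S c))) \<le> L"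
  proof -
    have "(\<Sum>c\<in>CC S. K X S c * (g (upd_conf X S c) - g (upd_conf Y S c))) \<le> (\<Sum>c\<in>CC S. K X S c * L)"
    proof (rule sum_mono)
      fix c assume c: "c \<in> CC S"
      have "\<bar>g (upd_conf X S c) - g (upd_conf Y S c)\<bar> \<le> L"
        using lg upd_in[OF X SV c] upd_in[OF Y SV c] v agr unfolding lip_def
        by (metis upd_other[OF vS agr])
      then show "K X S c * (g (upd_conf X S c) - g (upd_conf Y S c)) \<le> K X S c * L"
        using K_nn[OF fS, of X c] by (intro mult_left_mono) auto
    qed
    also have "\<dots> = L" using K_sum[OF fS] by (simp add: sum_distrib_right[symmetric])
    finally show ?thesis .
  qed
  show ?thesis
  proof (cases "v \<in> boundary V E S")
    case False
    have "K X S c = K Y S c" for c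
    proof -
      have W: "W X S c' = W Y S c'" for c' unfolding W_def using mb_eq_nobd[OF vS False agr] by simp
      then have "Z X S = Z Y S" unfolding Z_def by simp
      then show ?thesis unfolding K_def using W by simp
    qed
    then show ?thesis using split first False by simp
  next
    case True
    have osc: "?h c - ?h c' \<le> real (card S) * L" if c: "c \<in> CC S" and c': "c' \<in> CC S" for c c'
    proof -
      have "\<bar>?h c - ?h c'\<bar> \<le> real (card S) * L"
        by (rule lip_diff[OF lg L0 upd_in[OF Y SV c] upd_in[OF Y SV c'] _ fS]) (auto simp: upd_conf_def)
      then show ?thesis by simp
    qed
    have eqs: "sum (K X S) (CC S) = sum (K Y S) (CC S)" using K_sum[OF fS] by simp
    have P1: "(\<Sum>c\<in>CC S. (K X S c - K Y S c) * ?h c) \<le> real (card S) * L * (\<Sum>c\<in>CC S. max 0 (K X S c - K Y S c))"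
      by (rule pos_part[OF finCC[OF fS] CC_ne eqs osc])
    have P2: "(\<Sum>c\<in>CC S. (K Y S c - K X S c) * (- ?h c)) \<le> real (card S) * L * (\<Sum>c\<in>CC S. max 0 (K Y S c - K X S c))"
      by (rule pos_part[OF finCC[OF fS] CC_ne eqs[symmetric]]) (use osc in auto)
    have P2': "(\<Sum>c\<in>CC S. (K X S c - K Y S c) * ?h c) = (\<Sum>c\<in>CC S. (K Y S c - K X S c) * (- ?h c))"
      by (rule sum.cong) (auto simp: algebra_simps)
    have kL: "real (card S) * L \<ge> 0" using L0 by simp
    have agr': "\<forall>u. u \<noteq> v \<longrightarrow> Y u = X u" using agr by auto
    have "(\<Sum>c\<in>CC S. (K X S c - K Y S c) * ?h c) \<le> real (card S) * L * min 1 (Dsum S / real q ^ card S)"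
    proof (cases "Z Y S \<le> Z X S")
      case True
      have "(\<Sum>c\<in>CC S. max 0 (K X S c - K Y S c)) \<le> min 1 (Dsum S / real q ^ card S)"
        using K_pp1[OF fS, of X Y] K_pp2[OF fS True] D_bound[OF S X Y \<open>v \<in> boundary V E S\<close> agr] qpos
        by (smt (verit) divide_right_mono of_nat_0_le_iff zero_le_power min_def)
      then show ?thesis using P1 kL by (smt (verit) mult_left_mono)
    next
      case False
      then have ZZ: "Z X S \<le> Z Y S" by simp
      have "(\<Sum>c\<in>CC S. max 0 (K Y S c - K X S c)) \<le> min 1 (Dsum S / real q ^ card S)"
        using K_pp1[OF fS, of Y X] K_pp2[OF fS ZZ] D_bound[OF S Y X \<open>v \<in> boundary V E S\<close> agr'] qpos
        by (smt (verit) divide_right_mono of_nat_0_le_iff zero_le_power min_def)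
      then show ?thesis using P2 P2' kL by (smt (verit) mult_left_mono)
    qed
    moreover have "real (card S) * L * min 1 (Dsum S / real q ^ card S) = L * real (card S) * min 1 (Dsum S / real q ^ card S)"
      by (simp add: mult.commute)
    ultimately show ?thesis using split first True by simp
  qed
qed

end


locale potts2 = potts +
  assumes Pspos: "Psi_ratio V E SS psi > 0"
    and psiv: "\<forall>v\<in>V. psi_v SS psi v > 0"
    and hq: "real q \<ge> (2 * real (max_block SS)) ^ (max_block SS + 1) * real (bd_plus V E SS)
                    * Psi_ratio V E SS psi * lam powr (mu_plus V E q SS)"
begin

abbreviation "Ps \<equiv> Psi_ratio V E SS psi"

lemma blk_term:
  assumes S: "S \<in> SS" and vB: "v \<in> boundary V E S"
  shows "real (card S) * Ps * min 1 (Dsum S / real q ^ card S) \<le> 1 / 4"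
proof (rule numeric)
  have fS: "finite S" using blk_fin[OF S] .
  have "S \<noteq> {}" using vB unfolding boundary_def by auto
  then show k1: "card S \<ge> 1" using fS by (simp add: Suc_le_eq card_gt_0_iff)
  show d1: "card (boundary V E S) \<ge> 1" using vB fin_bd by (metis One_nat_def Suc_leI card_gt_0_iff empty_iff)
  show "card S \<le> max_block SS" unfolding max_block_def using finSS S by simp
  have "card (boundary V E S) \<le> card (boundary V E S) ^ min (card S) (card (boundary V E S))"
    using k1 d1 by (intro self_le_power) auto
  also have "\<dots> \<le> bd_plus V E SS" unfolding bd_plus_def using finSS S by (intro Max_ge) auto
  finally show "card (boundary V E S) \<le> bd_plus V E SS" .
  show "MM \<ge> 1" by (rule MM_ge1)
  show "Ps > 0" by (rule Pspos)
  show "real q > 0" using qpos by simp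
  show "real q \<ge> (2 * real (max_block SS)) ^ (max_block SS + 1) * real (bd_plus V E SS) * Ps * MM"
    by (rule hq)
qed

lemma ratio: "v \<in> V \<Longrightarrow> psi_bd V E SS psi v \<le> Ps * psi_v SS psi v"
proof -
  assume v: "v \<in> V"
  have "psi_bd V E SS psi v / psi_v SS psi v \<le> Ps"
    unfolding Psi_ratio_def using finV v by (intro Max_ge) auto
  then show ?thesis using psiv v by (simp add: divide_le_eq)
qed

lemma pm_le: "v \<in> V \<Longrightarrow> pm \<le> psi_v SS psi v"
  unfolding psi_min_def using finV by (intro Min_le) auto

lemma psi_v_alt: "psi_v SS psi v = (\<Sum>S\<in>SS. if v \<in> S then psi S else 0)"
  unfolding psi_v_def using finSS by (simp add: sum.inter_filter)
lemma psi_bd_alt: "psi_bd V E SS psi v = (\<Sum>S\<in>SS. if v \<in> boundary V E S then psi S else 0)"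
  unfolding psi_bd_def using finSS by (simp add: sum.inter_filter)

lemma one_side:
  assumes X: "X \<in> Om" and Y: "Y \<in> Om" and v: "v \<in> V" and agr: "\<forall>u. u \<noteq> v \<longrightarrow> X u = Y u"
    and lg: "lip L g" and L0: "L \<ge> 0"
  shows "Op g X - Op g Y \<le> (1 - 3 / 4 * pm) * L"
proof -
  define bnd where "bnd S = (if v \<in> S then 0 else L + (if v \<in> boundary V E S then L / (4 * Ps) else 0))" for S
  have "Op g X - Op g Y = (\<Sum>S\<in>SS. psi S * (AA g X S - AA g Y S))"
    unfolding Op_expand[OF X] Op_expand[OF Y] AA_def[symmetric] by (simp add: sum_subtractf right_diff_distrib)
  also have "\<dots> \<le> (\<Sum>S\<in>SS. psi S * bnd S)"
  proof (rule sum_mono, rule mult_left_mono)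
    fix S assume S: "S \<in> SS"
    show "psi S \<ge> 0" using psi_nn[OF S] .
    show "AA g X S - AA g Y S \<le> bnd S"
    proof (cases "v \<in> S")
      case True
      have agS: "\<forall>u. u \<notin> S \<longrightarrow> X u = Y u" using agr True by auto
      have "AA g X S = AA g Y S" unfolding AA_def using K_agree[OF agS] upd_agree[OF agS] by simp
      then show ?thesis unfolding bnd_def using True by simp
    next
      case False
      have bb: "AA g X S - AA g Y S \<le> L + (if v \<in> boundary V E S then L * real (card S) * min 1 (Dsum S / real q ^ card S) else 0)"
        by (rule block_bound[OF S X Y v False agr lg L0])
      show ?thesis
      proof (cases "v \<in> boundary V E S")
        case True
        have "L * real (card S) * min 1 (Dsum S / real q ^ card S) * (4 * Ps) \<le> L"
        proof -
          have "L * (real (card S) * Ps * min 1 (Dsum S / real q ^ card S) * 4) \<le> L * 1"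
            using blk_term[OF S True] L0 by (intro mult_left_mono) auto
          then show ?thesis by (simp add: mult_ac)
        qed
        then have "L * real (card S) * min 1 (Dsum S / real q ^ card S) \<le> L / (4 * Ps)"
          using Pspos by (simp add: le_divide_eq)
        then show ?thesis using bb True False unfolding bnd_def by simp
      next
        case F2: False
        then show ?thesis using bb False unfolding bnd_def by simp
      qed
    qed
  qed
  also have "\<dots> = L * (\<Sum>S\<in>SS. if v \<in> S then 0 else psi S) + L / (4 * Ps) * psi_bd V E SS psi v"
  proof -
    have "psi S * bnd S = L * (if v \<in> S then 0 else psi S) + L / (4 * Ps) * (if v \<in> boundary V E S then psi S else 0)" for S
      unfolding bnd_def boundary_def by (auto simp: algebra_simps)
    then show ?thesis unfolding psi_bd_alt by (simp add: sum.distrib sum_distrib_left)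
  qed
  also have "(\<Sum>S\<in>SS. if v \<in> S then 0 else psi S) = 1 - psi_v SS psi v"
  proof -
    have "(\<Sum>S\<in>SS. if v \<in> S then 0 else psi S) + (\<Sum>S\<in>SS. if v \<in> S then psi S else 0) = (\<Sum>S\<in>SS. psi S)"
      by (simp add: sum.distrib[symmetric] if_distrib cong: if_cong)
    then show ?thesis using psi_sum psi_v_alt by simp
  qed
  also have "L / (4 * Ps) * psi_bd V E SS psi v \<le> L / (4 * Ps) * (Ps * psi_v SS psi v)"
    using ratio[OF v] L0 Pspos by (intro mult_left_mono) auto
  also have "L / (4 * Ps) * (Ps * psi_v SS psi v) = L * psi_v SS psi v / 4" using Pspos by simp
  finally have "Op g X - Op g Y \<le> L * (1 - 3 / 4 * psi_v SS psi v)" by (simp add: algebra_simps)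
  also have "\<dots> \<le> L * (1 - 3 / 4 * pm)" using pm_le[OF v] L0 by (intro mult_left_mono) auto
  finally show ?thesis by (simp add: mult.commute)
qed

lemma contraction:
  assumes L0: "L \<ge> 0" and lg: "lip L g"
  shows "lip ((1 - 3 / 4 * pm) * L) (Op g)"
  unfolding lip_def
proof (intro ballI impI)
  fix X Y v assume X: "X \<in> Om" and Y: "Y \<in> Om" and v: "v \<in> V" and agr: "\<forall>u. u \<noteq> v \<longrightarrow> X u = Y u"
  have agr': "\<forall>u. u \<noteq> v \<longrightarrow> Y u = X u" using agr by auto
  show "\<bar>Op g X - Op g Y\<bar> \<le> (1 - 3 / 4 * pm) * L"
    using one_side[OF X Y v agr lg L0] one_side[OF Y X v agr' lg L0] by linarith
qed

end


lemma ln_bound2: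
  fixes a :: real
  assumes a0: "0 \<le> a" and a1: "a < 1"
  shows "ln (1 - a) \<le> - a - a ^ 2 / 2"
proof -
  let ?f = "\<lambda>x::real. ln (1 - x) + x + x ^ 2 / 2"
  have "?f a \<le> ?f 0"
  proof (rule DERIV_nonpos_imp_nonincreasing[OF a0])
    fix x assume x: "0 \<le> x" "x \<le> a"
    then have x1: "1 - x > 0" using a1 by simp
    have "DERIV ?f x :> (- 1 / (1 - x) + 1 + x)"
      using x1 by (auto intro!: derivative_eq_intros simp: power2_eq_square field_simps)
    moreover have "- 1 / (1 - x) + 1 + x \<le> 0"
    proof -
      have "- 1 / (1 - x) + 1 + x = (- 1 + (1 + x) * (1 - x)) / (1 - x)" using x1 by (simp add: field_simps)
      also have "\<dots> = - (x ^ 2) / (1 - x)" by (simp add: algebra_simps power2_eq_square)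
      also have "\<dots> \<le> 0" using x1 by (simp add: divide_nonpos_pos)
      finally show ?thesis .
    qed
    ultimately show "\<exists>y. DERIV ?f x :> y \<and> y \<le> 0" by blast
  qed
  then show ?thesis by simp
qed

lemma analytic:
  fixes n :: nat and p eps :: real
  assumes n2: "n \<ge> 2" and p0: "0 < p" and np: "real n * p \<le> real n - 1" and e0: "0 < eps" and e1: "eps < 1"
  shows "real n * (1 - 3 / 4 * p) ^ nat \<lfloor>2 / p * ln (real n / eps)\<rfloor> \<le> eps"
proof -
  define L where "L = ln (real n / eps)"
  define a where "a = 3 / 4 * p"
  define T where "T = nat \<lfloor>2 / p * L\<rfloor>"
  have p1: "p \<le> 1 - 1 / real n" using np n2 by (simp add: field_simps)
  have p_le1: "p < 1"
  proof -
    have "1 / real n > 0" using n2 by simp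
    then show ?thesis using p1 by linarith
  qed
  have Lln: "L = ln (real n) - ln eps" unfolding L_def using e0 n2 by (simp add: ln_div)
  have lneps: "ln eps < 0" using e0 e1 by simp
  have ln2: "ln 2 \<ge> (5 / 8 :: real)"
  proof -
    have "ln (1 - 1 / 2) \<le> - (1 / 2) - (1 / 2) ^ 2 / (2 :: real)" by (rule ln_bound2) auto
    moreover have "ln (1 - 1 / 2 :: real) = - ln 2" by (simp add: ln_div)
    ultimately show ?thesis by (simp add: power2_eq_square)
  qed
  have lnn: "ln (real n) \<ge> ln 2" using n2 by simp
  have L58: "L \<ge> 5 / 8" using Lln lneps lnn ln2 by linarith
  have key: "16 * L + 18 * L * p \<ge> 24 * p + 9 * p ^ 2"
  proof (cases "n = 2")
    case True
    then have ph: "p \<le> 1 / 2" using p1 by simp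
    have "18 * L * p \<ge> 18 * (5 / 8) * p" using L58 p0 by (intro mult_right_mono) auto
    moreover have "9 * p ^ 2 \<le> 9 * (1 / 2) * p" using ph p0 by (simp add: power2_eq_square)
    ultimately show ?thesis using L58 ph by linarith
  next
    case False
    then have n3: "n \<ge> 3" using n2 by simp
    have "ln (real n) \<ge> ln 3" using n3 by simp
    moreover have "ln (3::real) \<ge> 1"
    proof -
      have "ln (exp 1) \<le> ln (3::real)" using exp_le by (subst ln_le_cancel_iff) auto
      then show ?thesis by simp
    qed
    ultimately have L1: "L \<ge> 1" using Lln lneps by linarith
    have "18 * L * p \<ge> 18 * p" using L1 p0 by (simp add: mult_right_mono)
    moreover have "9 * p ^ 2 \<le> 9 * p" using p_le1 p0 by (simp add: power2_eq_square)
    ultimately show ?thesis using L1 p_le1 by linarith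
  qed
  have a0: "0 \<le> a" and a1: "a < 1" using p0 p_le1 unfolding a_def by auto
  have lnb: "ln (1 - a) \<le> - a - a ^ 2 / 2" by (rule ln_bound2[OF a0 a1])
  have TL: "real T \<ge> 2 / p * L - 1"
  proof -
    have "2 / p * L \<ge> 0" using L58 p0 by simp
    then show ?thesis unfolding T_def by linarith
  qed
  have Tn: "2 / p * L - 1 \<ge> 0"
  proof -
    have "2 / p * L \<ge> 2 * L" using L58 p0 p_le1 by (simp add: field_simps mult_left_mono)
    then show ?thesis using L58 by linarith
  qed
  have neg: "- a - a ^ 2 / 2 \<le> 0"
  proof -
    have "a ^ 2 \<ge> 0" by simp
    then show ?thesis using a0 by linarith
  qed
  have "real T * ln (1 - a) \<le> real T * (- a - a ^ 2 / 2)" using lnb by (intro mult_left_mono) auto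
  also have "\<dots> \<le> (2 / p * L - 1) * (- a - a ^ 2 / 2)" using TL neg by (intro mult_right_mono_neg) auto
  also have "\<dots> \<le> - L"
  proof -
    have "(2 / p * L - 1) * (a + a ^ 2 / 2) = (2 * L - p) * (24 + 9 * p) / 32"
      unfolding a_def using p0 by (simp add: field_simps power2_eq_square)
    also have "\<dots> \<ge> L" using key by (simp add: field_simps power2_eq_square algebra_simps)
    finally show ?thesis by (simp add: algebra_simps)
  qed
  finally have "real T * ln (1 - a) \<le> - L" .
  then have "ln (real n) + real T * ln (1 - a) \<le> ln eps" using Lln by simp
  moreover have "ln (real n * (1 - a) ^ T) = ln (real n) + real T * ln (1 - a)"
    using a1 n2 by (simp add: ln_mult ln_realpow)
  ultimately have "ln (real n * (1 - a) ^ T) \<le> ln eps" by simp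
  moreover have "real n * (1 - a) ^ T > 0" using a1 n2 by simp
  ultimately have "real n * (1 - a) ^ T \<le> eps" using e0 by simp
  then show ?thesis unfolding T_def a_def L_def .
qed

context potts2 begin

lemma pm_pos: "V \<noteq> {} \<Longrightarrow> pm > 0"
  unfolding psi_min_def using finV psiv by (subst Min_gr_iff) auto

lemma pm_le_n: "V \<noteq> {} \<Longrightarrow> real (card V) * pm \<le> real (card V) - 1"
proof -
  assume Vne: "V \<noteq> {}"
  have "real (card V) * pm = (\<Sum>v\<in>V. pm)" by simp
  also have "\<dots> \<le> (\<Sum>v\<in>V. psi_v SS psi v)" by (rule sum_mono) (rule pm_le)
  also have "\<dots> = (\<Sum>v\<in>V. \<Sum>S\<in>SS. if v \<in> S then psi S else 0)" by (simp add: psi_v_alt)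
  also have "\<dots> = (\<Sum>S\<in>SS. \<Sum>v\<in>V. if v \<in> S then psi S else 0)" by (rule sum.swap)
  also have "\<dots> = (\<Sum>S\<in>SS. psi S * real (card S))"
  proof (rule sum.cong[OF refl])
    fix S assume S: "S \<in> SS"
    have "(\<Sum>v\<in>V. if v \<in> S then psi S else 0) = (\<Sum>v\<in>V \<inter> S. psi S)"
      using sum.inter_restrict[OF finV, of "\<lambda>_. psi S" S] by simp
    also have "V \<inter> S = S" using blk_sub[OF S] by auto
    finally show "(\<Sum>v\<in>V. if v \<in> S then psi S else 0) = psi S * real (card S)" by simp
  qed
  also have "\<dots> \<le> (\<Sum>S\<in>SS. psi S * (real (card V) - 1))"
  proof (rule sum_mono, rule mult_left_mono)
    fix S assume S: "S \<in> SS"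
    show "psi S \<ge> 0" by (rule psi_nn[OF S])
    have "S \<subset> V" using blk_sub[OF S] S VnS by auto
    then have "card S < card V" using finV by (rule psubset_card_mono[rotated])
    then show "real (card S) \<le> real (card V) - 1" by linarith
  qed
  also have "\<dots> = real (card V) - 1" by (simp add: sum_distrib_right[symmetric] psi_sum)
  finally show ?thesis .
qed

lemma main:
  assumes Vne: "V \<noteq> {}" and e0: "0 < eps" and e1: "eps < 1"
  shows "(\<forall>x\<in>Om. \<exists>t. tv_dist Om (mat_pow Om PP t x) gb \<le> eps)
       \<and> real (mixing_time Om PP gb eps) \<le> 2 / pm * ln (real (card V) / eps)"
proof -
  define T where "T = nat \<lfloor>2 / pm * ln (real (card V) / eps)\<rfloor>"
  have p0: "pm > 0" by (rule pm_pos[OF Vne])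
  have np: "real (card V) * pm \<le> real (card V) - 1" by (rule pm_le_n[OF Vne])
  have n2: "card V \<ge> 2"
  proof -
    have "card V \<noteq> 0" using Vne finV by simp
    then have "real (card V) * pm > 0" using p0 by simp
    then have "real (card V) > 1" using np by linarith
    then show ?thesis by linarith
  qed
  have "real (card V) * pm \<le> real (card V) * 1" using np by simp
  then have "pm \<le> 1" using n2 by (simp add: mult_le_cancel_left_pos)
  then have r0: "1 - 3 / 4 * pm \<ge> 0" by simp
  have tv: "tv_dist Om (mat_pow Om PP T x) gb \<le> eps" if x: "x \<in> Om" for x
  proof -
    have "tv_dist Om (mat_pow Om PP T x) gb \<le> real (card V) * (1 - 3 / 4 * pm) ^ T"
      by (rule tv_bound[OF contraction r0 x])
    also have "\<dots> \<le> eps" unfolding T_def by (rule analytic[OF n2 p0 np e0 e1])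
    finally show ?thesis .
  qed
  have "mixing_time Om PP gb eps \<le> T"
    unfolding mixing_time_def
  proof (rule Max.boundedI)
    show "finite ((\<lambda>x. LEAST t. tv_dist Om (mat_pow Om PP t x) gb \<le> eps) ` Om)" using finOm by simp
    show "(\<lambda>x. LEAST t. tv_dist Om (mat_pow Om PP t x) gb \<le> eps) ` Om \<noteq> {}" using Om_ne by simp
    fix a assume "a \<in> (\<lambda>x. LEAST t. tv_dist Om (mat_pow Om PP t x) gb \<le> eps) ` Om"
    then obtain x where x: "x \<in> Om" and a: "a = (LEAST t. tv_dist Om (mat_pow Om PP t x) gb \<le> eps)" by blast
    show "a \<le> T" unfolding a by (rule Least_le) (rule tv[OF x])
  qed
  then have "real (mixing_time Om PP gb eps) \<le> real T" by simp
  also have "\<dots> \<le> 2 / pm * ln (real (card V) / eps)"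
  proof -
    have "ln (real (card V) / eps) \<ge> 0" using n2 e0 e1 by (simp add: ln_ge_zero_iff le_divide_eq)
    then have "2 / pm * ln (real (card V) / eps) \<ge> 0" using p0 by simp
    then show ?thesis unfolding T_def by linarith
  qed
  finally show ?thesis using tv by blast
qed

end



lemma cross_bd:
  assumes sg: "simple_graph V E" and rt: "E\<^sup>*\<^sup>* a b" and aS: "a \<in> S" and bS: "b \<notin> S"
  shows "\<exists>u. u \<in> boundary V E S"
  using rt bS
proof (induction rule: rtranclp_induct)
  case base then show ?case using aS by simp
next
  case (step y z)
  show ?case
  proof (cases "y \<in> S")
    case True
    have "z \<in> V" "E z y" using step.hyps(2) sg unfolding simple_graph_def by auto
    then have "z \<in> boundary V E S" using True step.prems unfolding boundary_def by auto
    then show ?thesis by blast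
  next
    case False
    then show ?thesis using step.IH by blast
  qed
qed

theorem theorem2p3:
  fixes V :: "'v set" and E :: "'v \<Rightarrow> 'v \<Rightarrow> bool" and q :: nat and lam :: real
    and \<S> :: "'v set set" and \<psi> :: "'v set \<Rightarrow> real" and eps :: real
  assumes "simple_graph V E" and "connected_graph V E"
    and "block_system V \<S>" and "V \<notin> \<S>"
    and "prob_on \<S> \<psi>" and "\<forall>v\<in>V. psi_v \<S> \<psi> v > 0"
    and "lam > 1"
    and "real q \<ge> (2 * real (max_block \<S>)) ^ (max_block \<S> + 1) * real (bd_plus V E \<S>)
                    * Psi_ratio V E \<S> \<psi> * lam powr (mu_plus V E q \<S>)"
    and "0 < eps" and "eps < 1"
  shows "(\<forall>x\<in>configs V q. \<exists>t. tv_dist (configs V q) (mat_pow (configs V q) (block_dyn V E q lam \<S> \<psi>) t x)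
                                  (gibbs V E q lam) \<le> eps)
       \<and> real (mixing_time (configs V q) (block_dyn V E q lam \<S> \<psi>) (gibbs V E q lam) eps)
           \<le> 2 / psi_min V \<S> \<psi> * ln (real (card V) / eps)"
proof -
  note sg = assms(1) and conn = assms(2) and bs = assms(3) and VnS = assms(4) and pr = assms(5)
    and psiv = assms(6) and lam = assms(7) and hq = assms(8)
  have finV: "finite V" using sg by (simp add: simple_graph_def)
  have finSS: "finite \<S>" using pr by (simp add: prob_on_def)
  have Vne: "V \<noteq> {}" using conn by (simp add: connected_graph_def)
  then obtain w where w: "w \<in> V" by blast
  have pw: "psi_v \<S> \<psi> w > 0" using psiv w by simp
  have "\<exists>S\<in>{S\<in>\<S>. w \<in> S}. \<psi> S > 0"
  proof (rule ccontr)
    assume "\<not> (\<exists>S\<in>{S\<in>\<S>. w \<in> S}. \<psi> S > 0)"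
    then have "\<forall>S\<in>{S\<in>\<S>. w \<in> S}. \<psi> S \<le> 0" by (simp add: not_less)
    then have "psi_v \<S> \<psi> w \<le> 0" unfolding psi_v_def by (intro sum_nonpos) blast
    then show False using pw by simp
  qed
  then obtain S where S: "S \<in> \<S>" "w \<in> S" "\<psi> S > 0" by blast
  have SV: "S \<subseteq> V" using bs S unfolding block_system_def by auto
  have "S \<noteq> V" using S(1) VnS by auto
  then obtain z where z: "z \<in> V" "z \<notin> S" using SV by blast
  have "E\<^sup>*\<^sup>* w z" using conn w z unfolding connected_graph_def by auto
  then obtain u where u: "u \<in> boundary V E S" using cross_bd[OF sg _ S(2) z(2)] by blast
  have uV: "u \<in> V" using u unfolding boundary_def by auto
  have pbd: "psi_bd V E \<S> \<psi> u > 0"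
  proof -
    have "\<psi> S \<le> psi_bd V E \<S> \<psi> u" unfolding psi_bd_def
      by (rule member_le_sum) (use S u finSS pr in \<open>auto simp: prob_on_def\<close>)
    then show ?thesis using S by simp
  qed
  have Pspos: "Psi_ratio V E \<S> \<psi> > 0"
  proof -
    have "psi_bd V E \<S> \<psi> u / psi_v \<S> \<psi> u \<le> Psi_ratio V E \<S> \<psi>"
      unfolding Psi_ratio_def using finV uV by (intro Max_ge) auto
    moreover have "psi_bd V E \<S> \<psi> u / psi_v \<S> \<psi> u > 0" using pbd psiv uV by simp
    ultimately show ?thesis by linarith
  qed
  have fS: "finite S" using SV finV finite_subset by blast
  have s1: "max_block \<S> \<ge> 1"
  proof -
    have "card S \<ge> 1" using S(2) fS by (metis One_nat_def Suc_leI card_gt_0_iff empty_iff)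
    moreover have "card S \<le> max_block \<S>" unfolding max_block_def using finSS S by simp
    ultimately show ?thesis by simp
  qed
  have bp1: "bd_plus V E \<S> \<ge> 1"
  proof -
    have fb: "finite (boundary V E S)" unfolding boundary_def using finV by auto
    have d1: "card (boundary V E S) \<ge> 1" using u fb by (metis One_nat_def Suc_leI card_gt_0_iff empty_iff)
    then have "1 \<le> card (boundary V E S) ^ min (card S) (card (boundary V E S))" by simp
    also have "\<dots> \<le> bd_plus V E \<S>" unfolding bd_plus_def using finSS S by (intro Max_ge) auto
    finally show ?thesis .
  qed
  have "(2 * real (max_block \<S>)) ^ (max_block \<S> + 1) * real (bd_plus V E \<S>)
                    * Psi_ratio V E \<S> \<psi> * lam powr (mu_plus V E q \<S>) > 0"
    using s1 bp1 Pspos lam by simp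
  then have "real q > 0" using hq by linarith
  then have qpos: "q > 0" by simp
  interpret potts2 V E q lam \<S> \<psi>
    by unfold_locales (fact sg bs VnS pr lam qpos Pspos psiv hq)+
  show ?thesis using main[OF Vne assms(9,10)] by simp
qed


end
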